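(* Let $R$ be a commutative Noetherian ring and $\phi\colon\mathbb{Z}\to\mathsf{P}(\operatorname{Spec}(R))$ an sp-filtration satisfying the weak Cousin condition. Then there exists an integer $j_0$ such that $\phi(j)=\phi(j_0)$ for all $j\le j_0$, and the subset $\phi(j_0)\subset\operatorname{Spec}(R)$ is open and closed. Also, the set $\bigcap_{i\in\mathbb{Z}}\phi(i)$ is open and closed.
   Context: An sp-filtration is a decreasing map $\phi\colon\mathbb{Z}\to\mathsf{P}(\operatorname{Spec}(R))$ (i.e. $\phi(i)\supset\phi(i+1)$) whose values are subsets stable under specialization. $\phi$ satisfies the weak Cousin condition if for every $j\in\mathbb{Z}$ and primes ${\mathfrak p}\subsetneq{\mathfrak q}$ with no prime strictly between them, ${\mathfrak q}\in\phi(j)$ implies ${\mathfrak p}\in\phi(j-1)$. Topology on $\operatorname{Spec}(R)$ is the Zariski topology. *)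

theory Defs
  imports "HOL-Algebra.Ring_Divisibility" "HOL-Algebra.Ideal"
begin

definition Spec :: "('a, 'b) ring_scheme \<Rightarrow> 'a set set" where
  "Spec R = {P. primeideal P R}"

definition zariski_closed :: "('a, 'b) ring_scheme \<Rightarrow> 'a set set \<Rightarrow> bool" where
  "zariski_closed R S \<longleftrightarrow> (\<exists>I. I \<subseteq> carrier R \<and> S = {P \<in> Spec R. I \<subseteq> P})"

definition zariski_open :: "('a, 'b) ring_scheme \<Rightarrow> 'a set set \<Rightarrow> bool" where
  "zariski_open R U \<longleftrightarrow> U \<subseteq> Spec R \<and> zariski_closed R (Spec R - U)"

definition specialization_closed :: "('a, 'b) ring_scheme \<Rightarrow> 'a set set \<Rightarrow> bool" where
  "specialization_closed R S \<longleftrightarrow> S \<subseteq> Spec R \<and>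
     (\<forall>P Q. P \<in> S \<and> Q \<in> Spec R \<and> P \<subseteq> Q \<longrightarrow> Q \<in> S)"

definition sp_filtration :: "('a, 'b) ring_scheme \<Rightarrow> (int \<Rightarrow> 'a set set) \<Rightarrow> bool" where
  "sp_filtration R \<phi> \<longleftrightarrow> (\<forall>i. specialization_closed R (\<phi> i)) \<and> (\<forall>i. \<phi> (i + 1) \<subseteq> \<phi> i)"

definition weak_cousin :: "('a, 'b) ring_scheme \<Rightarrow> (int \<Rightarrow> 'a set set) \<Rightarrow> bool" where
  "weak_cousin R \<phi> \<longleftrightarrow> (\<forall>j P Q. P \<in> Spec R \<and> Q \<in> Spec R \<and> P \<subset> Q \<and>
       \<not> (\<exists>T \<in> Spec R. P \<subset> T \<and> T \<subset> Q) \<and> Q \<in> \<phi> j \<longrightarrow> P \<in> \<phi> (j - 1))"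

end

theory Submission
  imports Defs
begin

locale NC = noetherian_ring R + cring R for R (structure)

context ring begin
lemma ideal_crit:
  assumes "I \<subseteq> carrier R" "\<zero> \<in> I" "\<And>a b. a\<in>I \<Longrightarrow> b\<in>I \<Longrightarrow> a \<oplus> b \<in> I"
    "\<And>a r. a\<in>I \<Longrightarrow> r\<in>carrier R \<Longrightarrow> r \<otimes> a \<in> I" "\<And>a r. a\<in>I \<Longrightarrow> r\<in>carrier R \<Longrightarrow> a \<otimes> r \<in> I"
  shows "ideal I R"
proof (rule idealI[OF ring_axioms])
  show "subgroup I (add_monoid R)"
  proof
    show "I \<subseteq> carrier (add_monoid R)" using assms(1) by simp
    show "\<one>\<^bsub>add_monoid R\<^esub> \<in> I" using assms(2) by simp
    fix x y assume "x \<in> I" "y \<in> I"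
    thus "x \<otimes>\<^bsub>add_monoid R\<^esub> y \<in> I" using assms(3) by simp
  next
    fix x assume x: "x \<in> I"
    hence xc: "x \<in> carrier R" using assms(1) by auto
    have "\<ominus> x = (\<ominus> \<one>) \<otimes> x" using xc by (simp add: l_minus)
    hence "\<ominus> x \<in> I" using assms(4)[OF x, of "\<ominus> \<one>"] by simp
    thus "inv\<^bsub>add_monoid R\<^esub> x \<in> I" by (simp add: a_inv_def)
  qed
qed (use assms in auto)
end

context noetherian_ring begin
lemma max_family:
  assumes "F \<noteq> {}" "\<And>I. I \<in> F \<Longrightarrow> ideal I R"
  shows "\<exists>M\<in>F. \<forall>X\<in>F. M \<subseteq> X \<longrightarrow> X = M"
proof (rule subset_Zorn_nonempty[OF assms(1)])
  fix C assume ne: "C \<noteq> {}" and C: "subset.chain F C"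
  have CF: "C \<subseteq> F" using C unfolding pred_on.chain_def by simp
  have "subset.chain {I. ideal I R} C" using C assms(2) unfolding pred_on.chain_def by auto
  hence "\<Union>C \<in> C" by (rule ideal_chain_is_trivial[OF ne])
  thus "\<Union>C \<in> F" using CF by (rule subsetD[rotated])
qed
end

definition sat :: "('a, 'b) ring_scheme \<Rightarrow> 'a set \<Rightarrow> 'a set \<Rightarrow> 'a set" where
  "sat R T J = {r \<in> carrier R. \<exists>s \<in> carrier R - T. s \<otimes>\<^bsub>R\<^esub> r \<in> J}"

definition satd :: "('a, 'b) ring_scheme \<Rightarrow> 'a set \<Rightarrow> 'a set \<Rightarrow> bool" where
  "satd R T J \<longleftrightarrow> (\<forall>s \<in> carrier R - T. \<forall>r \<in> carrier R. s \<otimes>\<^bsub>R\<^esub> r \<in> J \<longrightarrow> r \<in> J)"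

context cring begin

lemma sat_ideal:
  assumes T: "primeideal T R" and J: "ideal J R"
  shows "ideal (sat R T J) R"
proof (rule ideal_crit)
  interpret J: ideal J R by fact
  interpret T: primeideal T R by fact
  have oneT: "\<one> \<notin> T" using T.I_notcarr T.one_imp_carrier by auto
  show "sat R T J \<subseteq> carrier R" unfolding sat_def by auto
  show "\<zero> \<in> sat R T J" unfolding sat_def using oneT by (auto intro!: bexI[of _ \<one>])
  fix a b assume a: "a \<in> sat R T J"
  then obtain s where s: "s \<in> carrier R" "s \<notin> T" "s \<otimes> a \<in> J" and ac: "a \<in> carrier R" unfolding sat_def by auto
  { fix r assume r: "r \<in> carrier R"
    have "s \<otimes> (r \<otimes> a) = r \<otimes> (s \<otimes> a)" using s r ac by (metis m_lcomm)
    hence "s \<otimes> (r \<otimes> a) \<in> J" using J.I_l_closed s r by simp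
    thus "r \<otimes> a \<in> sat R T J" unfolding sat_def using s r ac by auto
    thus "a \<otimes> r \<in> sat R T J" using m_comm[OF r ac] by simp }
  assume b: "b \<in> sat R T J"
  then obtain t where t: "t \<in> carrier R" "t \<notin> T" "t \<otimes> b \<in> J" and bc: "b \<in> carrier R" unfolding sat_def by auto
  have "(s \<otimes> t) \<otimes> (a \<oplus> b) = t \<otimes> (s \<otimes> a) \<oplus> s \<otimes> (t \<otimes> b)"
    using s t ac bc by algebra
  also have "\<dots> \<in> J" using J.I_l_closed J.a_closed s t by simp
  finally have "(s \<otimes> t) \<otimes> (a \<oplus> b) \<in> J" .
  moreover have "s \<otimes> t \<notin> T" using T.I_prime s t by auto
  ultimately show "a \<oplus> b \<in> sat R T J" unfolding sat_def using s t ac bc by auto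
qed

lemma sat_sub: assumes "J \<subseteq> carrier R" "primeideal T R" shows "J \<subseteq> sat R T J"
proof
  fix x assume x: "x \<in> J"
  have "\<one> \<notin> T" using primeideal.I_notcarr[OF assms(2)] ideal.one_imp_carrier[OF primeideal.axioms(1)[OF assms(2)]] by auto
  thus "x \<in> sat R T J" unfolding sat_def using x assms(1) by (auto intro!: bexI[of _ \<one>])
qed

lemma sat_mono: "J \<subseteq> J' \<Longrightarrow> sat R T J \<subseteq> sat R T J'"
  unfolding sat_def by auto

lemma sat_satd: assumes T: "primeideal T R" shows "satd R T (sat R T J)"
  unfolding satd_def
proof (intro ballI impI)
  fix s r assume s: "s \<in> carrier R - T" and r: "r \<in> carrier R" and sr: "s \<otimes> r \<in> sat R T J"
  then obtain t where t: "t \<in> carrier R" "t \<notin> T" "t \<otimes> (s \<otimes> r) \<in> J" unfolding sat_def by auto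
  have "(t \<otimes> s) \<otimes> r \<in> J" using t s r by (simp add: m_assoc)
  moreover have "t \<otimes> s \<notin> T" using primeideal.I_prime[OF T, of t s] s t by auto
  ultimately show "r \<in> sat R T J" unfolding sat_def using s t r by auto
qed

lemma satd_sat: "satd R T J \<Longrightarrow> J \<subseteq> carrier R \<Longrightarrow> sat R T J \<subseteq> J"
  unfolding satd_def sat_def by auto

lemma satd_sat_eq: "satd R T J \<Longrightarrow> J \<subseteq> carrier R \<Longrightarrow> primeideal T R \<Longrightarrow> sat R T J = J"
  using satd_sat sat_sub by (metis subset_antisym)

lemma satd_mono_prime: "satd R p J \<Longrightarrow> p \<subseteq> T \<Longrightarrow> satd R T J"
  unfolding satd_def by auto

lemma prime_satd: assumes "primeideal P R" "P \<subseteq> T" shows "satd R T P"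
  unfolding satd_def
proof (intro ballI impI)
  fix s r assume "s \<in> carrier R - T" "r \<in> carrier R" "s \<otimes> r \<in> P"
  thus "r \<in> P" using primeideal.I_prime[OF assms(1), of s r] assms(2) by auto
qed

end

context cring begin
lemma prime_not_carrier: "primeideal Q R \<Longrightarrow> \<one> \<notin> Q"
  using primeideal.I_notcarr ideal.one_imp_carrier primeideal.axioms(1) by metis
lemma prime_sub: "primeideal Q R \<Longrightarrow> Q \<subseteq> carrier R"
  using primeideal.axioms(1) ideal.Icarr by fastforce
end

lemma ne_I: "x \<in> A \<Longrightarrow> A \<noteq> {}" by auto

context NC begin

definition goodI :: "'a set \<Rightarrow> bool" where
  "goodI I \<longleftrightarrow> (\<exists>F. finite F \<and> (\<forall>f\<in>F. primeideal f R \<and> I \<subseteq> f) \<and>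
       (\<forall>Q. primeideal Q R \<and> I \<subseteq> Q \<longrightarrow> (\<exists>f\<in>F. f \<subseteq> Q)))"

lemma all_good: assumes "ideal I0 R" shows "goodI I0"
proof (rule ccontr)
  assume bad: "\<not> goodI I0"
  let ?B = "{I. ideal I R \<and> \<not> goodI I}"
  have "I0 \<in> ?B" using bad assms by simp
  hence "?B \<noteq> {}" by (rule ne_I)
  moreover have "\<And>I. I \<in> ?B \<Longrightarrow> ideal I R" by simp
  ultimately obtain M where M: "M \<in> ?B" and Mmax: "\<forall>X\<in>?B. M \<subseteq> X \<longrightarrow> X = M"
    using max_family[of ?B] by blast
  have Mid: "ideal M R" and Mbad: "\<not> goodI M" using M by auto
  interpret M: ideal M R by fact
  have sub: "M \<subseteq> carrier R" using M.Icarr by auto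
  { assume "primeideal M R"
    hence "goodI M" unfolding goodI_def by (intro exI[of _ "{M}"]) auto
    with Mbad have False by simp }
  hence np: "\<not> primeideal M R" by auto
  show False
  proof (rule M.primeidealCE[OF is_cring np])
    assume "carrier R = M"
    hence "goodI M" unfolding goodI_def
      using prime_sub by (intro exI[of _ "{}"]) (auto dest: prime_not_carrier)
    with Mbad show False by simp
  next
    assume "\<exists>a b. a \<in> carrier R \<and> b \<in> carrier R \<and> a \<otimes> b \<in> M \<and> a \<notin> M \<and> b \<notin> M"
    then obtain a b where ab: "a \<in> carrier R" "b \<in> carrier R" "a \<otimes> b \<in> M" "a \<notin> M" "b \<notin> M" by auto
    have ext: "goodI (Idl (insert c M))" if c: "c \<in> carrier R" "c \<notin> M" for c
    proof -
      have ideal: "ideal (Idl (insert c M)) R" using genideal_ideal c sub by auto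
      have "M \<subseteq> Idl (insert c M)" "c \<in> Idl (insert c M)" using genideal_self[of "insert c M"] c sub by auto
      hence "Idl (insert c M) \<noteq> M" "M \<subseteq> Idl (insert c M)" using c by auto
      thus ?thesis using Mmax ideal by auto
    qed
    obtain Fa where Fa: "finite Fa" "\<forall>f\<in>Fa. primeideal f R \<and> Idl (insert a M) \<subseteq> f"
        "\<forall>Q. primeideal Q R \<and> Idl (insert a M) \<subseteq> Q \<longrightarrow> (\<exists>f\<in>Fa. f \<subseteq> Q)"
      using ext[of a] ab unfolding goodI_def by auto
    obtain Fb where Fb: "finite Fb" "\<forall>f\<in>Fb. primeideal f R \<and> Idl (insert b M) \<subseteq> f"
        "\<forall>Q. primeideal Q R \<and> Idl (insert b M) \<subseteq> Q \<longrightarrow> (\<exists>f\<in>Fb. f \<subseteq> Q)"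
      using ext[of b] ab unfolding goodI_def by auto
    have sa: "M \<subseteq> Idl (insert a M)" "M \<subseteq> Idl (insert b M)"
      using genideal_self[of "insert a M"] genideal_self[of "insert b M"] ab sub by auto
    have "goodI M" unfolding goodI_def
    proof (intro exI[of _ "Fa \<union> Fb"] conjI)
      show "finite (Fa \<union> Fb)" using Fa Fb by simp
      show "\<forall>f\<in>Fa \<union> Fb. primeideal f R \<and> M \<subseteq> f" using Fa(2) Fb(2) sa by blast
      show "\<forall>Q. primeideal Q R \<and> M \<subseteq> Q \<longrightarrow> (\<exists>f\<in>Fa \<union> Fb. f \<subseteq> Q)"
      proof (intro allI impI)
        fix Q assume Q: "primeideal Q R \<and> M \<subseteq> Q"
        hence "a \<in> Q \<or> b \<in> Q" using primeideal.I_prime[of Q R a b] ab by auto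
        thus "\<exists>f\<in>Fa \<union> Fb. f \<subseteq> Q"
        proof
          assume "a \<in> Q"
          hence "Idl (insert a M) \<subseteq> Q" using Q genideal_minimal[of Q "insert a M"] primeideal.axioms(1) by auto
          hence "\<exists>f\<in>Fa. f \<subseteq> Q" using Fa(3) Q by simp
          then obtain f where "f \<in> Fa" "f \<subseteq> Q" by (elim bexE)
          thus ?thesis by (intro bexI[of _ f]) simp_all
        next
          assume "b \<in> Q"
          hence "Idl (insert b M) \<subseteq> Q" using Q genideal_minimal[of Q "insert b M"] primeideal.axioms(1) by auto
          hence "\<exists>f\<in>Fb. f \<subseteq> Q" using Fb(3) Q by simp
          then obtain f where "f \<in> Fb" "f \<subseteq> Q" by (elim bexE)
          thus ?thesis by (intro bexI[of _ f]) simp_all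
        qed
      qed
    qed
    with Mbad show False by simp
  qed
qed

lemma finite_primes:
  "\<exists>F. finite F \<and> (\<forall>f\<in>F. primeideal f R) \<and> (\<forall>Q. primeideal Q R \<longrightarrow> (\<exists>f\<in>F. f \<subseteq> Q))"
  using all_good[OF zeroideal] unfolding goodI_def
  by (metis additive_subgroup.zero_closed empty_subsetI insert_subset primeideal.axioms(1) ideal.axioms(1))

lemma minimal_over:
  assumes I: "ideal I R" and Q: "primeideal Q R" "I \<subseteq> Q"
  shows "\<exists>T. primeideal T R \<and> I \<subseteq> T \<and> T \<subseteq> Q \<and>
      (\<forall>T'. primeideal T' R \<and> I \<subseteq> T' \<and> T' \<subseteq> T \<longrightarrow> T' = T)"
proof -
  obtain F where F: "finite F" "\<forall>f\<in>F. primeideal f R \<and> I \<subseteq> f"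
     "\<forall>Q. primeideal Q R \<and> I \<subseteq> Q \<longrightarrow> (\<exists>f\<in>F. f \<subseteq> Q)"
    using all_good[OF I] unfolding goodI_def by blast
  let ?G = "{f\<in>F. f \<subseteq> Q}"
  have "?G \<noteq> {}" using F(3) Q by auto
  moreover have "finite ?G" using F(1) by simp
  ultimately obtain T where T: "T \<in> ?G" and Tmin: "\<forall>b\<in>?G. b \<subseteq> T \<longrightarrow> T = b"
    using finite_has_minimal[of ?G] by metis
  show ?thesis
  proof (intro exI[of _ T] conjI allI impI)
    show "primeideal T R" "I \<subseteq> T" "T \<subseteq> Q" using T F(2) by auto
    fix T' assume T': "primeideal T' R \<and> I \<subseteq> T' \<and> T' \<subseteq> T"
    then obtain f where f: "f \<in> F" "f \<subseteq> T'" using F(3) by blast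
    have TQ: "T \<subseteq> Q" using T by simp
    have "f \<subseteq> Q" using f(2) T' TQ by (meson subset_trans)
    hence "f \<in> ?G" using f(1) by simp
    moreover have "f \<subseteq> T" using f(2) T' by (meson subset_trans)
    ultimately have "T = f" using Tmin by simp
    thus "T' = T" using f T' by (meson subset_antisym)
  qed
qed
end

lemma mem_set_add: "z \<in> I <+>\<^bsub>R\<^esub> J \<longleftrightarrow> (\<exists>i\<in>I. \<exists>j\<in>J. z = i \<oplus>\<^bsub>R\<^esub> j)"
  unfolding set_add_def' by auto

lemma mem_PIdl: "z \<in> PIdl\<^bsub>R\<^esub> a \<longleftrightarrow> (\<exists>r\<in>carrier R. z = r \<otimes>\<^bsub>R\<^esub> a)"
  unfolding cgenideal_def by auto

primrec pw :: "('a, 'b) ring_scheme \<Rightarrow> 'a set \<Rightarrow> 'a set \<Rightarrow> nat \<Rightarrow> 'a set" where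
  "pw R T P 0 = carrier R"
| "pw R T P (Suc k) = genideal R (P \<union> {t \<otimes>\<^bsub>R\<^esub> e | t e. t \<in> T \<and> e \<in> pw R T P k})"

definition col :: "('a, 'b) ring_scheme \<Rightarrow> 'a set \<Rightarrow> 'a set \<Rightarrow> 'a set" where
  "col R J E = {y \<in> carrier R. \<forall>e\<in>E. y \<otimes>\<^bsub>R\<^esub> e \<in> J}"

context cring begin

lemma pw_ideal: assumes "T \<subseteq> carrier R" "P \<subseteq> carrier R" shows "ideal (pw R T P k) R"
proof (induction k)
  case 0 thus ?case by (simp add: oneideal)
next
  case (Suc k)
  have "{t \<otimes> e | t e. t \<in> T \<and> e \<in> pw R T P k} \<subseteq> carrier R"
    using assms(1) ideal.Icarr[OF Suc] by auto
  thus ?case using genideal_ideal assms(2) by simp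
qed

lemma pw_P: assumes "T \<subseteq> carrier R" "P \<subseteq> carrier R" shows "P \<subseteq> pw R T P k"
proof (cases k)
  case 0 thus ?thesis using assms by simp
next
  case (Suc k')
  have "{t \<otimes> e | t e. t \<in> T \<and> e \<in> pw R T P k'} \<subseteq> carrier R"
    using assms(1) ideal.Icarr[OF pw_ideal[OF assms]] by auto
  thus ?thesis using genideal_self[of "P \<union> {t \<otimes> e | t e. t \<in> T \<and> e \<in> pw R T P k'}"] assms Suc by auto
qed

lemma pw_mult: assumes "T \<subseteq> carrier R" "P \<subseteq> carrier R" "t \<in> T" "e \<in> pw R T P k"
  shows "t \<otimes> e \<in> pw R T P (Suc k)"
proof -
  have "{t \<otimes> e | t e. t \<in> T \<and> e \<in> pw R T P k} \<subseteq> carrier R"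
    using assms(1) ideal.Icarr[OF pw_ideal[OF assms(1,2)]] by auto
  hence "P \<union> {t \<otimes> e | t e. t \<in> T \<and> e \<in> pw R T P k} \<subseteq> pw R T P (Suc k)"
    using genideal_self[of "P \<union> {t \<otimes> e | t e. t \<in> T \<and> e \<in> pw R T P k}"] assms(2) by simp
  thus ?thesis using assms(3,4) by auto
qed

lemma pw_min: assumes "T \<subseteq> carrier R" "P \<subseteq> carrier R" "ideal J R" "P \<subseteq> J"
   "\<And>t e. t \<in> T \<Longrightarrow> e \<in> pw R T P k \<Longrightarrow> t \<otimes> e \<in> J"
  shows "pw R T P (Suc k) \<subseteq> J"
proof -
  have "P \<union> {t \<otimes> e | t e. t \<in> T \<and> e \<in> pw R T P k} \<subseteq> J" using assms(4,5) by auto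
  thus ?thesis using genideal_minimal[OF assms(3)] by simp
qed

lemma pw_Suc_sub: assumes "T \<subseteq> carrier R" "P \<subseteq> carrier R" shows "pw R T P (Suc k) \<subseteq> pw R T P k"
proof (rule pw_min[OF assms pw_ideal[OF assms] pw_P[OF assms]])
  fix t e assume "t \<in> T" "e \<in> pw R T P k"
  thus "t \<otimes> e \<in> pw R T P k" using ideal.I_l_closed[OF pw_ideal[OF assms]] assms(1) by auto
qed

lemma pw_antimono: assumes "T \<subseteq> carrier R" "P \<subseteq> carrier R" "k \<le> m" shows "pw R T P m \<subseteq> pw R T P k"
  using assms(3)
proof (induction m)
  case 0 thus ?case by simp
next
  case (Suc m)
  show ?case
  proof (cases "k = Suc m")
    case False hence "k \<le> m" using Suc.prems by simp
    thus ?thesis using Suc.IH pw_Suc_sub[OF assms(1,2), of m] by auto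
  qed simp
qed

lemma pw_pow: assumes "T \<subseteq> carrier R" "P \<subseteq> carrier R" "y \<in> T" shows "y [^] k \<in> pw R T P k"
proof (induction k)
  case 0 thus ?case by simp
next
  case (Suc k)
  have "y \<otimes> y [^] k \<in> pw R T P (Suc k)" using pw_mult[OF assms(1,2,3) Suc] .
  moreover have "y [^] Suc k = y \<otimes> y [^] k" using assms by (simp add: nat_pow_Suc m_comm subsetD)
  ultimately show ?case by simp
qed

lemma col_ideal: assumes "ideal J R" "E \<subseteq> carrier R" shows "ideal (col R J E) R"
proof (rule ideal_crit)
  interpret J: ideal J R by fact
  show "col R J E \<subseteq> carrier R" unfolding col_def by auto
  show "\<zero> \<in> col R J E" unfolding col_def using assms(2) by auto
  fix a b assume a: "a \<in> col R J E"
  hence ac: "a \<in> carrier R" and ae: "\<And>e. e \<in> E \<Longrightarrow> a \<otimes> e \<in> J" unfolding col_def by auto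
  { fix r assume r: "r \<in> carrier R"
    have "\<And>e. e \<in> E \<Longrightarrow> (r \<otimes> a) \<otimes> e \<in> J"
    proof -
      fix e assume e: "e \<in> E"
      have "(r \<otimes> a) \<otimes> e = r \<otimes> (a \<otimes> e)" using r ac e assms(2) by (simp add: m_assoc subsetD)
      thus "(r \<otimes> a) \<otimes> e \<in> J" using J.I_l_closed[OF ae[OF e] r] by simp
    qed
    thus "r \<otimes> a \<in> col R J E" unfolding col_def using r ac by auto
    thus "a \<otimes> r \<in> col R J E" using m_comm[OF r ac] by simp }
  assume b: "b \<in> col R J E"
  hence bc: "b \<in> carrier R" and be: "\<And>e. e \<in> E \<Longrightarrow> b \<otimes> e \<in> J" unfolding col_def by auto
  have "\<And>e. e \<in> E \<Longrightarrow> (a \<oplus> b) \<otimes> e \<in> J"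
  proof -
    fix e assume e: "e \<in> E"
    have "(a \<oplus> b) \<otimes> e = a \<otimes> e \<oplus> b \<otimes> e" using ac bc e assms(2) by (simp add: l_distr subsetD)
    thus "(a \<oplus> b) \<otimes> e \<in> J" using J.a_closed[OF ae[OF e] be[OF e]] by simp
  qed
  thus "a \<oplus> b \<in> col R J E" unfolding col_def using ac bc by auto
qed

end

context NC begin

lemma colon_nilp:
  assumes T: "primeideal T R" and P: "ideal P R" "P \<subseteq> T" and x: "x \<in> T"
    and Tmin: "\<And>Q. primeideal Q R \<Longrightarrow> P \<subseteq> Q \<Longrightarrow> x \<in> Q \<Longrightarrow> Q \<subseteq> T \<Longrightarrow> Q = T"
  shows "\<exists>k. pw R T P k \<subseteq> sat R T (Idl (insert x P))"
proof -
  have Tc: "T \<subseteq> carrier R" using prime_sub[OF T] .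
  have Pc: "P \<subseteq> carrier R" using P(2) Tc by simp
  have xc: "x \<in> carrier R" using x Tc by auto
  define B where "B = Idl (insert x P)"
  have Bid: "ideal B R" unfolding B_def using genideal_ideal Pc xc by simp
  have PB: "P \<subseteq> B" and xB: "x \<in> B" unfolding B_def using genideal_self[of "insert x P"] Pc xc by auto
  define N where "N = sat R T B"
  have Nid: "ideal N R" unfolding N_def by (rule sat_ideal[OF T Bid])
  have Nsd: "satd R T N" unfolding N_def by (rule sat_satd[OF T])
  have BN: "B \<subseteq> N" unfolding N_def using sat_sub[OF _ T] ideal.Icarr[OF Bid] by blast
  have Nc: "N \<subseteq> carrier R" using ideal.Icarr[OF Nid] by blast
  define c where "c k = col R N (pw R T P k)" for k
  have cid: "ideal (c k) R" for k unfolding c_def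
    using col_ideal[OF Nid] ideal.Icarr[OF pw_ideal[OF Tc Pc]] by blast
  have cmono: "c k \<subseteq> c (Suc k)" for k
    unfolding c_def col_def using pw_Suc_sub[OF Tc Pc, of k] by blast
  obtain k0 where k0max: "\<forall>X\<in>range c. c k0 \<subseteq> X \<longrightarrow> X = c k0"
    using max_family[of "range c"] cid by blast
  have ceq: "c (Suc k0) = c k0" using k0max cmono[of k0] by blast
  have key: "y \<in> c k0" if y: "y \<in> carrier R" and yT: "\<And>t. t \<in> T \<Longrightarrow> y \<otimes> t \<in> c k0" for y
  proof -
    define Z where "Z = {e \<in> carrier R. y \<otimes> e \<in> N}"
    have Zid: "ideal Z R" unfolding Z_def
    proof (rule ideal_crit)
      show "{e \<in> carrier R. y \<otimes> e \<in> N} \<subseteq> carrier R" by auto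
      show "\<zero> \<in> {e \<in> carrier R. y \<otimes> e \<in> N}" using y additive_subgroup.zero_closed[OF ideal.axioms(1)[OF Nid]] by simp
      fix a b assume a: "a \<in> {e \<in> carrier R. y \<otimes> e \<in> N}"
      { fix r assume r: "r \<in> carrier R"
        have "y \<otimes> (r \<otimes> a) = r \<otimes> (y \<otimes> a)" using y r a by (simp add: m_lcomm)
        hence "y \<otimes> (r \<otimes> a) \<in> N" using ideal.I_l_closed[OF Nid, of "y \<otimes> a" r] a r by simp
        thus "r \<otimes> a \<in> {e \<in> carrier R. y \<otimes> e \<in> N}" using r a by simp
        thus "a \<otimes> r \<in> {e \<in> carrier R. y \<otimes> e \<in> N}" using m_comm[of r a] r a by simp }
      assume b: "b \<in> {e \<in> carrier R. y \<otimes> e \<in> N}"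
      have "y \<otimes> (a \<oplus> b) = y \<otimes> a \<oplus> y \<otimes> b" using y a b by (simp add: r_distr)
      thus "a \<oplus> b \<in> {e \<in> carrier R. y \<otimes> e \<in> N}"
        using additive_subgroup.a_closed[OF ideal.axioms(1)[OF Nid]] a b by simp
    qed
    have "pw R T P (Suc k0) \<subseteq> Z"
    proof (rule pw_min[OF Tc Pc Zid])
      show "P \<subseteq> Z" unfolding Z_def
      proof
        fix p assume p: "p \<in> P"
        have "y \<otimes> p \<in> P" using ideal.I_l_closed[OF P(1) p y] .
        thus "p \<in> {e \<in> carrier R. y \<otimes> e \<in> N}" using p Pc PB BN by blast
      qed
      fix t e assume t: "t \<in> T" and e: "e \<in> pw R T P k0"
      have ec: "e \<in> carrier R" using e ideal.Icarr[OF pw_ideal[OF Tc Pc]] by blast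
      have tc: "t \<in> carrier R" using t Tc by blast
      have "(y \<otimes> t) \<otimes> e \<in> N" using yT[OF t] e unfolding c_def col_def by blast
      hence "y \<otimes> (t \<otimes> e) \<in> N" using y tc ec by (simp add: m_assoc)
      thus "t \<otimes> e \<in> Z" unfolding Z_def using tc ec by simp
    qed
    hence "y \<in> c (Suc k0)" unfolding c_def col_def Z_def using y by blast
    thus ?thesis using ceq by simp
  qed
  have csd: "satd R T (c k0)" unfolding satd_def
  proof (intro ballI impI)
    fix s y assume s: "s \<in> carrier R - T" and y: "y \<in> carrier R" and sy: "s \<otimes> y \<in> c k0"
    have "\<forall>e\<in>pw R T P k0. y \<otimes> e \<in> N"
    proof
      fix e assume e: "e \<in> pw R T P k0"
      have ec: "e \<in> carrier R" using e ideal.Icarr[OF pw_ideal[OF Tc Pc]] by blast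
      have "(s \<otimes> y) \<otimes> e \<in> N" using sy e unfolding c_def col_def by blast
      hence "s \<otimes> (y \<otimes> e) \<in> N" using s y ec by (simp add: m_assoc)
      thus "y \<otimes> e \<in> N" using Nsd s y ec unfolding satd_def by simp
    qed
    thus "y \<in> c k0" unfolding c_def col_def using y by blast
  qed
  have one: "\<one> \<in> c k0"
  proof (rule ccontr)
    assume n1: "\<one> \<notin> c k0"
    define A where "A = (\<lambda>y. col R (c k0) {y}) ` (carrier R - c k0)"
    have "col R (c k0) {\<one>} \<in> A" unfolding A_def using n1 by blast
    hence Ane: "A \<noteq> {}" by (rule ne_I)
    have Aid: "\<And>I. I \<in> A \<Longrightarrow> ideal I R" unfolding A_def using col_ideal[OF cid] by blast
    obtain Q0 where Q0A: "Q0 \<in> A" and Q0max: "\<forall>X\<in>A. Q0 \<subseteq> X \<longrightarrow> X = Q0"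
      using max_family[OF Ane Aid] by blast
    obtain y0 where y0: "y0 \<in> carrier R" "y0 \<notin> c k0" and Q0def: "Q0 = col R (c k0) {y0}"
      using Q0A unfolding A_def by blast
    have memQ0: "z \<in> Q0 \<longleftrightarrow> z \<in> carrier R \<and> z \<otimes> y0 \<in> c k0" for z
      unfolding Q0def col_def by simp
    have cQ0: "c k0 \<subseteq> Q0"
    proof
      fix z assume z: "z \<in> c k0"
      hence "z \<otimes> y0 \<in> c k0" using ideal.I_r_closed[OF cid z y0(1)] by simp
      thus "z \<in> Q0" using memQ0 z ideal.Icarr[OF cid] by blast
    qed
    have Q0id: "ideal Q0 R" using Aid[OF Q0A] .
    have Q0prime: "primeideal Q0 R"
    proof (rule primeidealI[OF Q0id is_cring])
      show "carrier R \<noteq> Q0" using memQ0[of \<one>] y0 by auto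
      fix a b assume a: "a \<in> carrier R" and b: "b \<in> carrier R" and ab: "a \<otimes> b \<in> Q0"
      show "a \<in> Q0 \<or> b \<in> Q0"
      proof (cases "a \<in> Q0")
        case True thus ?thesis by simp
      next
        case False hence na: "a \<notin> Q0" .
        hence ay: "a \<otimes> y0 \<notin> c k0" using memQ0 a by blast
        have ayc: "a \<otimes> y0 \<in> carrier R" using a y0 by simp
        have inA: "col R (c k0) {a \<otimes> y0} \<in> A" unfolding A_def using ay ayc by blast
        have "Q0 \<subseteq> col R (c k0) {a \<otimes> y0}"
        proof
          fix z assume z: "z \<in> Q0"
          hence zc: "z \<in> carrier R" and zy: "z \<otimes> y0 \<in> c k0" using memQ0 by auto
          have "z \<otimes> (a \<otimes> y0) = a \<otimes> (z \<otimes> y0)" using zc a y0 by (simp add: m_lcomm)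
          hence "z \<otimes> (a \<otimes> y0) \<in> c k0" using ideal.I_l_closed[OF cid zy a] by simp
          thus "z \<in> col R (c k0) {a \<otimes> y0}" unfolding col_def using zc by simp
        qed
        hence eq: "col R (c k0) {a \<otimes> y0} = Q0" using Q0max inA by blast
        have "b \<otimes> (a \<otimes> y0) = (a \<otimes> b) \<otimes> y0" using a b y0 by (simp add: m_assoc m_lcomm m_comm)
        moreover have "(a \<otimes> b) \<otimes> y0 \<in> c k0" using ab memQ0 by blast
        ultimately have "b \<in> col R (c k0) {a \<otimes> y0}" unfolding col_def using b by simp
        thus ?thesis using eq by simp
      qed
    qed
    have NQ0: "N \<subseteq> Q0"
    proof
      fix z assume z: "z \<in> N"
      have "\<forall>e\<in>pw R T P 0. z \<otimes> e \<in> N" using ideal.I_r_closed[OF Nid z] by simp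
      hence "z \<in> c 0" unfolding c_def col_def using z Nc by blast
      moreover have "c 0 \<subseteq> c k0"
      proof (induction k0)
        case (Suc k) thus ?case using cmono[of k] by blast
      qed simp
      ultimately show "z \<in> Q0" using cQ0 by blast
    qed
    have Q0T: "Q0 \<subseteq> T"
    proof
      fix a assume a: "a \<in> Q0"
      show "a \<in> T"
      proof (rule ccontr)
        assume "a \<notin> T"
        moreover have "a \<in> carrier R" "a \<otimes> y0 \<in> c k0" using a memQ0 by auto
        ultimately have "y0 \<in> c k0" using csd y0(1) unfolding satd_def by blast
        thus False using y0 by simp
      qed
    qed
    have "Q0 = T" using Tmin[OF Q0prime] PB xB BN NQ0 Q0T by blast
    hence "\<And>t. t \<in> T \<Longrightarrow> y0 \<otimes> t \<in> c k0" using memQ0 y0(1) by (auto simp: m_comm)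
    hence "y0 \<in> c k0" using key y0(1) by blast
    thus False using y0 by simp
  qed
  have "pw R T P k0 \<subseteq> N"
  proof
    fix e assume e: "e \<in> pw R T P k0"
    have "\<one> \<otimes> e \<in> N" using one e unfolding c_def col_def by blast
    thus "e \<in> N" using e ideal.Icarr[OF pw_ideal[OF Tc Pc]] by simp
  qed
  thus ?thesis unfolding N_def B_def by blast
qed

end

context cring begin
lemma set_add_mono_l: "X \<subseteq> M \<Longrightarrow> X <+>\<^bsub>R\<^esub> E \<subseteq> M <+>\<^bsub>R\<^esub> E"
  unfolding set_add_def' by blast
lemma in_set_add_l: assumes "ideal E R" "a \<in> X" "X \<subseteq> carrier R" shows "a \<in> X <+>\<^bsub>R\<^esub> E"
proof -
  have "a = a \<oplus> \<zero>" using assms(2,3) by auto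
  moreover have "\<zero> \<in> E" using additive_subgroup.zero_closed[OF ideal.axioms(1)[OF assms(1)]] .
  ultimately show ?thesis unfolding mem_set_add using assms(2) by blast
qed
lemma in_set_add_r: assumes "ideal X R" "a \<in> E" "E \<subseteq> carrier R" shows "a \<in> X <+>\<^bsub>R\<^esub> E"
proof -
  have "a = \<zero> \<oplus> a" using assms(2,3) by auto
  moreover have "\<zero> \<in> X" using additive_subgroup.zero_closed[OF ideal.axioms(1)[OF assms(1)]] .
  ultimately show ?thesis unfolding mem_set_add using assms(2) by blast
qed
lemma ideal_diff: assumes "ideal J R" "a \<in> J" "b \<in> J" shows "a \<ominus> b \<in> J"
  using assms additive_subgroup.a_closed additive_subgroup.a_inv_closed ideal.axioms(1)
  unfolding a_minus_def by metis
end

context NC begin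

lemma dcc:
  assumes T: "primeideal T R" and Pc: "P \<subseteq> carrier R"
  shows "F \<noteq> {} \<Longrightarrow> (\<And>J. J \<in> F \<Longrightarrow> ideal J R \<and> satd R T J \<and> pw R T P k \<subseteq> J)
    \<Longrightarrow> \<exists>M\<in>F. \<forall>X\<in>F. X \<subseteq> M \<longrightarrow> X = M"
proof (induction k arbitrary: F)
  case 0
  obtain M where M: "M \<in> F" using 0(1) by blast
  have allc: "\<forall>X\<in>F. X = carrier R"
  proof
    fix X assume X: "X \<in> F"
    have h: "ideal X R \<and> satd R T X \<and> pw R T P 0 \<subseteq> X" using 0(2)[OF X] .
    hence "pw R T P 0 \<subseteq> X" by (elim conjE)
    hence "carrier R \<subseteq> X" by (simp only: pw.simps)
    moreover have "X \<subseteq> carrier R" using ideal.Icarr[of X R] h by blast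
    ultimately show "X = carrier R" by (rule subset_antisym[rotated])
  qed
  show ?case
  proof (intro bexI[of _ M] ballI impI)
    fix X assume "X \<in> F"
    hence "X = carrier R" using allc by simp
    moreover have "M = carrier R" using allc M by simp
    ultimately show "X = M" by simp
  qed (rule M)
next
  case (Suc k F)
  have Tc: "T \<subseteq> carrier R" using prime_sub[OF T] .
  define E where "E = pw R T P k"
  define E' where "E' = pw R T P (Suc k)"
  have Eid: "ideal E R" unfolding E_def using pw_ideal[OF Tc Pc] .
  have Ec: "E \<subseteq> carrier R" using ideal.Icarr[OF Eid] by blast
  have E'id: "ideal E' R" unfolding E'_def using pw_ideal[OF Tc Pc] .
  have Fp: "\<And>J. J \<in> F \<Longrightarrow> ideal J R" "\<And>J. J \<in> F \<Longrightarrow> satd R T J" "\<And>J. J \<in> F \<Longrightarrow> E' \<subseteq> J"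
    using Suc.prems(2) unfolding E'_def by auto
  define G where "G = (\<lambda>J. sat R T (J <+>\<^bsub>R\<^esub> E)) ` F"
  have Gp: "ideal J R \<and> satd R T J \<and> pw R T P k \<subseteq> J" if JG: "J \<in> G" for J
  proof -
    obtain J0 where J0: "J0 \<in> F" "J = sat R T (J0 <+>\<^bsub>R\<^esub> E)" using JG unfolding G_def by blast
    have a: "ideal (J0 <+>\<^bsub>R\<^esub> E) R" using add_ideals[OF Fp(1)[OF J0(1)] Eid] .
    have "E \<subseteq> J0 <+>\<^bsub>R\<^esub> E" using in_set_add_r[OF Fp(1)[OF J0(1)] _ Ec] by blast
    also have "\<dots> \<subseteq> J" unfolding J0(2) using sat_sub[OF _ T] ideal.Icarr[OF a] by blast
    finally have "E \<subseteq> J" .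
    moreover have "ideal J R" unfolding J0(2) using sat_ideal[OF T a] .
    moreover have "satd R T J" unfolding J0(2) using sat_satd[OF T] .
    ultimately show ?thesis unfolding E_def by simp
  qed
  have "G \<noteq> {}" using Suc.prems(1) unfolding G_def by blast
  then obtain L where LG: "L \<in> G" and Lmin: "\<forall>X\<in>G. X \<subseteq> L \<longrightarrow> X = L"
    using Suc.IH[of G] Gp by blast
  define F' where "F' = {J\<in>F. sat R T (J <+>\<^bsub>R\<^esub> E) = L}"
  have F'ne: "F' \<noteq> {}" using LG unfolding G_def F'_def by blast
  have F'min: "\<exists>M\<in>F'. \<forall>X\<in>F'. X \<subseteq> M \<longrightarrow> X = M"
  proof (rule ccontr)
    assume "\<not> (\<exists>M\<in>F'. \<forall>X\<in>F'. X \<subseteq> M \<longrightarrow> X = M)"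
    hence "\<forall>M\<in>F'. \<exists>X. X \<in> F' \<and> X \<subseteq> M \<and> X \<noteq> M" by blast
    then obtain g where g: "\<And>M. M \<in> F' \<Longrightarrow> g M \<in> F' \<and> g M \<subseteq> M \<and> g M \<noteq> M" by metis
    obtain J0 where J0: "J0 \<in> F'" using F'ne by blast
    define sq where "sq n = (g ^^ n) J0" for n
    have sqF: "sq n \<in> F'" for n
    proof (induction n)
      case 0 thus ?case using J0 unfolding sq_def by simp
    next
      case (Suc n) thus ?case using g unfolding sq_def by simp
    qed
    have sqS: "sq (Suc n) \<subseteq> sq n" "sq (Suc n) \<noteq> sq n" for n
      using g[OF sqF[of n]] unfolding sq_def by simp_all
    have sq_anti: "n \<le> m \<Longrightarrow> sq m \<subseteq> sq n" for n m
    proof (induction m)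
      case 0 thus ?case by simp
    next
      case (Suc m) thus ?case using sqS(1)[of m] by (cases "n = Suc m") auto
    qed
    have sqid: "ideal (sq n) R" and sqsd: "satd R T (sq n)" and sqE': "E' \<subseteq> sq n"
      and sqL: "sat R T (sq n <+>\<^bsub>R\<^esub> E) = L" for n
      using sqF[of n] Fp unfolding F'_def by auto
    have sqc: "sq n \<subseteq> carrier R" for n using ideal.Icarr[OF sqid] by blast
    have exv: "\<exists>v. v \<in> sq n \<and> v \<in> E \<and> v \<notin> sq (Suc n)" for n
    proof (rule ccontr)
      assume "\<not> ?thesis"
      hence H: "\<And>v. v \<in> sq n \<Longrightarrow> v \<in> E \<Longrightarrow> v \<in> sq (Suc n)" by blast
      have "sq n \<subseteq> sq (Suc n)"
      proof
        fix a assume a: "a \<in> sq n"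
        have ac: "a \<in> carrier R" using a sqc by blast
        have "a \<in> sq n <+>\<^bsub>R\<^esub> E" using in_set_add_l[OF Eid a sqc] .
        hence "a \<in> sat R T (sq n <+>\<^bsub>R\<^esub> E)" using sat_sub[OF _ T] ideal.Icarr[OF add_ideals[OF sqid Eid]] by blast
        hence "a \<in> sat R T (sq (Suc n) <+>\<^bsub>R\<^esub> E)" using sqL by simp
        then obtain s where s: "s \<in> carrier R" "s \<notin> T" "s \<otimes> a \<in> sq (Suc n) <+>\<^bsub>R\<^esub> E" unfolding sat_def by blast
        then obtain j e where je: "j \<in> sq (Suc n)" "e \<in> E" "s \<otimes> a = j \<oplus> e" unfolding mem_set_add by blast
        have jc: "j \<in> carrier R" using je(1) sqc by blast
        have ec: "e \<in> carrier R" using je(2) Ec by blast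
        have e_eq: "e = (s \<otimes> a) \<ominus> j"
        proof -
          have "(s \<otimes> a) \<ominus> j = (j \<oplus> e) \<ominus> j" using je(3) by simp
          also have "\<dots> = e" using jc ec by algebra
          finally show ?thesis by simp
        qed
        have "s \<otimes> a \<in> sq n" using ideal.I_l_closed[OF sqid a s(1)] .
        moreover have "j \<in> sq n" using je(1) sqS(1) by blast
        ultimately have "e \<in> sq n" using ideal_diff[OF sqid] e_eq by simp
        hence "e \<in> sq (Suc n)" using H je(2) by blast
        hence "s \<otimes> a \<in> sq (Suc n)" using je(3) ideal.I_l_closed additive_subgroup.a_closed
            ideal.axioms(1)[OF sqid] je(1) by metis
        thus "a \<in> sq (Suc n)" using sqsd s ac unfolding satd_def by blast
      qed
      thus False using sqS[of n] by blast
    qed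
    then obtain v where v: "\<And>n. v n \<in> sq n" "\<And>n. v n \<in> E" "\<And>n. v n \<notin> sq (Suc n)" by metis
    have vc: "v n \<in> carrier R" for n using v(2) Ec by blast
    define W where "W = rec_nat E' (\<lambda>n Wn. Wn <+>\<^bsub>R\<^esub> PIdl (v n))"
    have W0: "W 0 = E'" and WS: "W (Suc n) = W n <+>\<^bsub>R\<^esub> PIdl (v n)" for n unfolding W_def by simp_all
    have Wid: "ideal (W n) R" for n
    proof (induction n)
      case 0 thus ?case using W0 E'id by simp
    next
      case (Suc n) thus ?case unfolding WS using add_ideals cgenideal_ideal[OF vc] by blast
    qed
    have Wc: "W n \<subseteq> carrier R" for n using ideal.Icarr[OF Wid] by blast
    have Wmono: "W n \<subseteq> W (Suc n)" for n
      unfolding WS using in_set_add_l[OF cgenideal_ideal[OF vc] _ Wc] by blast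
    have W0sub: "E' \<subseteq> W n" for n
    proof (induction n)
      case 0 thus ?case using W0 by simp
    next
      case (Suc n) thus ?case using Wmono[of n] by blast
    qed
    have Inv: "\<forall>w\<in>W n. \<forall>c\<in>carrier R - T. \<forall>m\<ge>n. c \<otimes> v m \<oplus> w \<notin> sq (Suc m)" for n
    proof (induction n)
      case 0
      show ?case
      proof (intro ballI allI impI notI)
        fix w c m assume w: "w \<in> W 0" and c: "c \<in> carrier R - T" and m: "0 \<le> m"
          and H: "c \<otimes> v m \<oplus> w \<in> sq (Suc m)"
        have wq: "w \<in> sq (Suc m)" using w W0 sqE' by blast
        have wc: "w \<in> carrier R" using w Wc by blast
        have cc: "c \<in> carrier R" using c by blast
        have "c \<otimes> v m = (c \<otimes> v m \<oplus> w) \<ominus> w" using cc vc wc by algebra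
        hence "c \<otimes> v m \<in> sq (Suc m)" using ideal_diff[OF sqid H wq] by simp
        hence "v m \<in> sq (Suc m)" using sqsd c vc unfolding satd_def by blast
        thus False using v(3) by blast
      qed
    next
      case (Suc n)
      show ?case
      proof (intro ballI allI impI notI)
        fix w c m assume w: "w \<in> W (Suc n)" and c: "c \<in> carrier R - T" and m: "Suc n \<le> m"
          and H: "c \<otimes> v m \<oplus> w \<in> sq (Suc m)"
        obtain w' z where w': "w' \<in> W n" "z \<in> PIdl (v n)" "w = w' \<oplus> z" using w unfolding WS mem_set_add by blast
        obtain d where d: "d \<in> carrier R" "z = d \<otimes> v n" using w'(2) unfolding mem_PIdl by blast
        have w'c: "w' \<in> carrier R" using w'(1) Wc by blast
        have cc: "c \<in> carrier R" using c by blast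
        show False
        proof (cases "d \<in> T")
          case False
          have "sq (Suc m) \<subseteq> sq (Suc n)" using sq_anti m by simp
          hence H1: "c \<otimes> v m \<oplus> (w' \<oplus> d \<otimes> v n) \<in> sq (Suc n)" using H w'(3) d(2) by blast
          have "v m \<in> sq (Suc n)" using v(1)[of m] sq_anti[OF m] by blast
          hence H2: "c \<otimes> v m \<in> sq (Suc n)" using ideal.I_l_closed[OF sqid _ cc] by blast
          have "d \<otimes> v n \<oplus> w' = (c \<otimes> v m \<oplus> (w' \<oplus> d \<otimes> v n)) \<ominus> c \<otimes> v m"
            using cc vc d(1) w'c by algebra
          hence "d \<otimes> v n \<oplus> w' \<in> sq (Suc n)" using ideal_diff[OF sqid H1 H2] by simp
          moreover have "d \<in> carrier R - T" using d(1) False by simp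
          ultimately show False using Suc.IH[rule_format, OF w'(1) _ le_refl] by blast
        next
          case True
          have "d \<otimes> v n \<in> E'" unfolding E'_def using pw_mult[OF Tc Pc True] v(2) unfolding E_def by blast
          hence "d \<otimes> v n \<in> W n" using W0sub by blast
          hence wW: "w \<in> W n" using w'(3) d(2) w'(1) additive_subgroup.a_closed[OF ideal.axioms(1)[OF Wid]] by simp
          have nm: "n \<le> m" using m by simp
          show False using Suc.IH[rule_format, OF wW c nm] H by simp
        qed
      qed
    qed
    have vnot: "v n \<notin> W n" for n
    proof
      assume "v n \<in> W n"
      hence i1: "\<ominus> v n \<in> W n" using additive_subgroup.a_inv_closed[OF ideal.axioms(1)[OF Wid]] by simp
      have i2: "\<one> \<in> carrier R - T" using prime_not_carrier[OF T] by simp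
      have "\<one> \<otimes> v n \<oplus> \<ominus> v n \<notin> sq (Suc n)" using Inv[of n, rule_format, OF i1 i2 le_refl] .
      moreover have "\<one> \<otimes> v n \<oplus> \<ominus> v n = \<zero>" using vc by algebra
      ultimately show False using additive_subgroup.zero_closed[OF ideal.axioms(1)[OF sqid]] by simp
    qed
    have vin: "v n \<in> W (Suc n)" for n
    proof -
      have "PIdl (v n) \<subseteq> carrier R" using ideal.Icarr[OF cgenideal_ideal[OF vc[of n]]] by blast
      thus ?thesis unfolding WS using in_set_add_r[OF Wid cgenideal_self[OF vc]] by blast
    qed
    have "range W \<noteq> {}" by simp
    moreover have "\<And>I. I \<in> range W \<Longrightarrow> ideal I R" using Wid by auto
    ultimately obtain M where "M \<in> range W" and Nmax: "\<forall>X\<in>range W. M \<subseteq> X \<longrightarrow> X = M"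
      using max_family[of "range W"] by blast
    then obtain N where MN: "M = W N" by blast
    have "W (Suc N) \<in> range W" by simp
    hence "W (Suc N) = W N" using Nmax Wmono[of N] MN by simp
    thus False using vnot[of N] vin[of N] by simp
  qed
  then obtain M where MF': "M \<in> F'" and Mmin: "\<forall>X\<in>F'. X \<subseteq> M \<longrightarrow> X = M" by blast
  show ?case
  proof (intro bexI[of _ M] ballI impI)
    show "M \<in> F" using MF' unfolding F'_def by simp
    fix X assume X: "X \<in> F" and XM: "X \<subseteq> M"
    have "sat R T (X <+>\<^bsub>R\<^esub> E) \<subseteq> sat R T (M <+>\<^bsub>R\<^esub> E)" using sat_mono set_add_mono_l[OF XM] by blast
    hence "sat R T (X <+>\<^bsub>R\<^esub> E) \<subseteq> L" using MF' unfolding F'_def by simp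
    moreover have "sat R T (X <+>\<^bsub>R\<^esub> E) \<in> G" unfolding G_def using X by blast
    ultimately have "sat R T (X <+>\<^bsub>R\<^esub> E) = L" using Lmin by blast
    hence "X \<in> F'" unfolding F'_def using X by simp
    thus "X = M" using Mmin XM by blast
  qed
qed

end

context cring begin

lemma Idl_ideal: assumes "ideal K R" shows "Idl K = K"
proof
  show "Idl K \<subseteq> K" using genideal_minimal[OF assms] by simp
  show "K \<subseteq> Idl K" using genideal_self ideal.Icarr[OF assms] by blast
qed

lemma Idl_insert: assumes K: "ideal K R" and g: "g \<in> carrier R"
  shows "Idl (insert g K) = K <+>\<^bsub>R\<^esub> PIdl g"
proof -
  have Kc: "K \<subseteq> carrier R" using ideal.Icarr[OF K] by blast
  have Pg: "ideal (PIdl g) R" using cgenideal_ideal[OF g] .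
  have Pgc: "PIdl g \<subseteq> carrier R" using ideal.Icarr[OF Pg] by blast
  have "Idl (insert g K) = Idl (K \<union> PIdl g)"
  proof
    have s1: "K \<union> PIdl g \<subseteq> carrier R" using Kc Pgc by simp
    have "insert g K \<subseteq> K \<union> PIdl g" using cgenideal_self[OF g] by simp
    also have "\<dots> \<subseteq> Idl (K \<union> PIdl g)" using genideal_self[OF s1] .
    finally show "Idl (insert g K) \<subseteq> Idl (K \<union> PIdl g)" using genideal_minimal[OF genideal_ideal[OF s1]] by simp
    have I: "ideal (Idl (insert g K)) R" using genideal_ideal Kc g by simp
    have "insert g K \<subseteq> Idl (insert g K)" using genideal_self[of "insert g K"] Kc g by simp
    hence "PIdl g \<subseteq> Idl (insert g K)" using cgenideal_minimal[OF I] by simp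
    hence "K \<union> PIdl g \<subseteq> Idl (insert g K)" using \<open>insert g K \<subseteq> Idl (insert g K)\<close> by blast
    thus "Idl (K \<union> PIdl g) \<subseteq> Idl (insert g K)" using genideal_minimal[OF I] by simp
  qed
  also have "\<dots> = K <+>\<^bsub>R\<^esub> PIdl g" using union_genideal[OF K Pg] .
  finally show ?thesis .
qed

lemma nak:
  assumes p: "primeideal p R" and fin: "finite A"
  shows "A \<subseteq> carrier R \<Longrightarrow> ideal K R \<Longrightarrow> M = Idl (K \<union> A)
    \<Longrightarrow> M \<subseteq> sat R p (K <+>\<^bsub>R\<^esub> Idl {y \<otimes> m | y m. y \<in> p \<and> m \<in> M}) \<Longrightarrow> M \<subseteq> sat R p K"
  using fin
proof (induction A arbitrary: K)
  case empty
  hence "M = K" using Idl_ideal by simp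
  thus ?case using sat_sub[OF _ p] ideal.Icarr[OF empty.prems(2)] by blast
next
  case (insert g A K)
  have pc: "p \<subseteq> carrier R" using prime_sub[OF p] .
  have gc: "g \<in> carrier R" and Ac: "A \<subseteq> carrier R" using insert.prems(1) by auto
  have K: "ideal K R" using insert.prems(2) .
  have Kc: "K \<subseteq> carrier R" using ideal.Icarr[OF K] by blast
  define K' where "K' = Idl (insert g K)"
  have K'eq: "K' = K <+>\<^bsub>R\<^esub> PIdl g" unfolding K'_def using Idl_insert[OF K gc] .
  have K'id: "ideal K' R" unfolding K'_def using genideal_ideal Kc gc by simp
  have K'c: "K' \<subseteq> carrier R" using ideal.Icarr[OF K'id] by blast
  have KK': "K \<subseteq> K'" and gK': "g \<in> K'" unfolding K'_def using genideal_self[of "insert g K"] Kc gc by auto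
  have Mid: "ideal M R" using insert.prems(3) genideal_ideal Kc insert.prems(1) by simp
  have Mc: "M \<subseteq> carrier R" using ideal.Icarr[OF Mid] by blast
  have s2: "K' \<union> A \<subseteq> carrier R" using K'c Ac by simp
  have s3: "K \<union> insert g A \<subseteq> carrier R" using Kc insert.prems(1) by simp
  have GM: "K \<union> insert g A \<subseteq> M" unfolding insert.prems(3) using genideal_self[OF s3] .
  have Meq: "M = Idl (K' \<union> A)"
  proof
    have "K \<union> insert g A \<subseteq> K' \<union> A" using KK' gK' by blast
    also have "\<dots> \<subseteq> Idl (K' \<union> A)" using genideal_self[OF s2] .
    finally show "M \<subseteq> Idl (K' \<union> A)" unfolding insert.prems(3)
      using genideal_minimal[OF genideal_ideal[OF s2]] by simp
    have "insert g K \<subseteq> M" using GM by blast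
    hence "K' \<subseteq> M" unfolding K'_def using genideal_minimal[OF Mid] by simp
    moreover have "A \<subseteq> M" using GM by blast
    ultimately show "Idl (K' \<union> A) \<subseteq> M" using genideal_minimal[OF Mid] by simp
  qed
  define JM where "JM = Idl {y \<otimes> m | y m. y \<in> p \<and> m \<in> M}"
  have hyp: "M \<subseteq> sat R p (K <+>\<^bsub>R\<^esub> JM)" using insert.prems(4) unfolding JM_def .
  have "M \<subseteq> sat R p (K' <+>\<^bsub>R\<^esub> JM)" using hyp sat_mono[OF set_add_mono_l[OF KK']] by blast
  hence MK': "M \<subseteq> sat R p K'" using insert.IH[OF Ac K'id Meq] unfolding JM_def by blast
  define Zs where "Zs = {z \<in> carrier R. \<exists>S\<in>carrier R - p. \<exists>k\<in>K. \<exists>c\<in>p. S \<otimes> z = k \<oplus> c \<otimes> g}"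
  have one_np: "\<one> \<in> carrier R - p" using prime_not_carrier[OF p] by simp
  have k0: "\<zero> \<in> K" and p0: "\<zero> \<in> p"
    using additive_subgroup.zero_closed[OF ideal.axioms(1)[OF K]]
      additive_subgroup.zero_closed[OF ideal.axioms(1)[OF primeideal.axioms(1)[OF p]]] by auto
  have Zsid: "ideal Zs R"
  proof (rule ideal_crit)
    show "Zs \<subseteq> carrier R" unfolding Zs_def by blast
    have "\<one> \<otimes> \<zero> = \<zero> \<oplus> \<zero> \<otimes> g" using gc by algebra
    thus "\<zero> \<in> Zs" unfolding Zs_def using one_np k0 p0 by blast
  next
    fix a b assume a: "a \<in> Zs" and b: "b \<in> Zs"
    obtain S1 k1 c1 where 1: "S1 \<in> carrier R" "S1 \<notin> p" "k1 \<in> K" "c1 \<in> p" "S1 \<otimes> a = k1 \<oplus> c1 \<otimes> g" and ac: "a \<in> carrier R"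
      using a unfolding Zs_def by blast
    obtain S2 k2 c2 where 2: "S2 \<in> carrier R" "S2 \<notin> p" "k2 \<in> K" "c2 \<in> p" "S2 \<otimes> b = k2 \<oplus> c2 \<otimes> g" and bc: "b \<in> carrier R"
      using b unfolding Zs_def by blast
    have k1c: "k1 \<in> carrier R" "k2 \<in> carrier R" using 1(3) 2(3) Kc by auto
    have c1c: "c1 \<in> carrier R" "c2 \<in> carrier R" using 1(4) 2(4) pc by auto
    have "(S1 \<otimes> S2) \<otimes> (a \<oplus> b) = S2 \<otimes> (S1 \<otimes> a) \<oplus> S1 \<otimes> (S2 \<otimes> b)" using 1(1) 2(1) ac bc by algebra
    also have "\<dots> = S2 \<otimes> (k1 \<oplus> c1 \<otimes> g) \<oplus> S1 \<otimes> (k2 \<oplus> c2 \<otimes> g)" using 1(5) 2(5) by simp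
    also have "\<dots> = (S2 \<otimes> k1 \<oplus> S1 \<otimes> k2) \<oplus> (S2 \<otimes> c1 \<oplus> S1 \<otimes> c2) \<otimes> g"
      using 1(1) 2(1) k1c c1c gc by algebra
    finally have eq: "(S1 \<otimes> S2) \<otimes> (a \<oplus> b) = (S2 \<otimes> k1 \<oplus> S1 \<otimes> k2) \<oplus> (S2 \<otimes> c1 \<oplus> S1 \<otimes> c2) \<otimes> g" .
    have "S2 \<otimes> k1 \<oplus> S1 \<otimes> k2 \<in> K"
      using ideal.I_l_closed[OF K 1(3) 2(1)] ideal.I_l_closed[OF K 2(3) 1(1)] additive_subgroup.a_closed[OF ideal.axioms(1)[OF K]] by blast
    moreover have "S2 \<otimes> c1 \<oplus> S1 \<otimes> c2 \<in> p"
      using ideal.I_l_closed[OF primeideal.axioms(1)[OF p]] 1(1,4) 2(1,4)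
        additive_subgroup.a_closed[OF ideal.axioms(1)[OF primeideal.axioms(1)[OF p]]] by blast
    moreover have "S1 \<otimes> S2 \<in> carrier R - p" using primeideal.I_prime[OF p, of S1 S2] 1(1,2) 2(1,2) by auto
    ultimately show "a \<oplus> b \<in> Zs" unfolding Zs_def using eq ac bc by blast
  next
    fix a r assume a: "a \<in> Zs" and r: "r \<in> carrier R"
    obtain S1 k1 c1 where 1: "S1 \<in> carrier R" "S1 \<notin> p" "k1 \<in> K" "c1 \<in> p" "S1 \<otimes> a = k1 \<oplus> c1 \<otimes> g" and ac: "a \<in> carrier R"
      using a unfolding Zs_def by blast
    have k1c: "k1 \<in> carrier R" using 1(3) Kc by auto
    have c1c: "c1 \<in> carrier R" using 1(4) pc by auto
    have "S1 \<otimes> (r \<otimes> a) = r \<otimes> (S1 \<otimes> a)" using 1(1) r ac by algebra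
    also have "\<dots> = r \<otimes> (k1 \<oplus> c1 \<otimes> g)" using 1(5) by simp
    also have "\<dots> = r \<otimes> k1 \<oplus> (r \<otimes> c1) \<otimes> g" using r k1c c1c gc by algebra
    finally have eq: "S1 \<otimes> (r \<otimes> a) = r \<otimes> k1 \<oplus> (r \<otimes> c1) \<otimes> g" .
    have "r \<otimes> k1 \<in> K" using ideal.I_l_closed[OF K 1(3) r] .
    moreover have "r \<otimes> c1 \<in> p" using ideal.I_l_closed[OF primeideal.axioms(1)[OF p] 1(4) r] .
    ultimately show "r \<otimes> a \<in> Zs" unfolding Zs_def using eq 1(1,2) r ac by blast
    thus "a \<otimes> r \<in> Zs" using m_comm[OF r ac] by simp
  qed
  have gens: "{y \<otimes> m | y m. y \<in> p \<and> m \<in> M} \<subseteq> Zs"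
  proof
    fix z assume "z \<in> {y \<otimes> m | y m. y \<in> p \<and> m \<in> M}"
    then obtain y m where ym: "y \<in> p" "m \<in> M" "z = y \<otimes> m" by blast
    have yc: "y \<in> carrier R" using ym(1) pc by blast
    have mc: "m \<in> carrier R" using ym(2) Mc by blast
    have "m \<in> sat R p K'" using MK' ym(2) by blast
    then obtain S where S: "S \<in> carrier R" "S \<notin> p" "S \<otimes> m \<in> K'" unfolding sat_def by blast
    have "S \<otimes> m \<in> K <+>\<^bsub>R\<^esub> PIdl g" using S(3) K'eq by simp
    then obtain k w where kw: "k \<in> K" "w \<in> PIdl g" "S \<otimes> m = k \<oplus> w" unfolding mem_set_add by blast
    obtain r where r: "r \<in> carrier R" "w = r \<otimes> g" using kw(2) unfolding mem_PIdl by blast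
    have kc: "k \<in> carrier R" using kw(1) Kc by blast
    have "S \<otimes> z = y \<otimes> (S \<otimes> m)" using ym(3) S(1) yc mc by algebra
    also have "\<dots> = y \<otimes> (k \<oplus> r \<otimes> g)" using kw(3) r(2) by simp
    also have "\<dots> = y \<otimes> k \<oplus> (y \<otimes> r) \<otimes> g" using yc kc r(1) gc by algebra
    finally have eq: "S \<otimes> z = y \<otimes> k \<oplus> (y \<otimes> r) \<otimes> g" .
    have "y \<otimes> k \<in> K" using ideal.I_l_closed[OF K kw(1) yc] .
    moreover have "y \<otimes> r \<in> p" using ideal.I_r_closed[OF primeideal.axioms(1)[OF p] ym(1) r(1)] .
    moreover have "z \<in> carrier R" using ym(3) yc mc by simp
    ultimately show "z \<in> Zs" unfolding Zs_def using eq S(1,2) by blast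
  qed
  have JMZ: "JM \<subseteq> Zs" unfolding JM_def using genideal_minimal[OF Zsid gens] .
  have "g \<in> M" using GM by blast
  hence "g \<in> sat R p (K <+>\<^bsub>R\<^esub> JM)" using hyp by blast
  then obtain s where s: "s \<in> carrier R" "s \<notin> p" "s \<otimes> g \<in> K <+>\<^bsub>R\<^esub> JM" unfolding sat_def by blast
  then obtain k z where kz: "k \<in> K" "z \<in> JM" "s \<otimes> g = k \<oplus> z" unfolding mem_set_add by blast
  obtain S k' c where Skc: "S \<in> carrier R" "S \<notin> p" "k' \<in> K" "c \<in> p" "S \<otimes> z = k' \<oplus> c \<otimes> g" and zc: "z \<in> carrier R"
    using JMZ kz(2) unfolding Zs_def by blast
  have kc: "k \<in> carrier R" "k' \<in> carrier R" using kz(1) Skc(3) Kc by auto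
  have cc: "c \<in> carrier R" using Skc(4) pc by blast
  have "(S \<otimes> s \<ominus> c) \<otimes> g = S \<otimes> (s \<otimes> g) \<ominus> c \<otimes> g" using Skc(1) s(1) cc gc by algebra
  also have "\<dots> = S \<otimes> (k \<oplus> z) \<ominus> c \<otimes> g" using kz(3) by simp
  also have "\<dots> = S \<otimes> k \<oplus> (S \<otimes> z) \<ominus> c \<otimes> g" using Skc(1) kc zc cc gc by algebra
  also have "\<dots> = S \<otimes> k \<oplus> (k' \<oplus> c \<otimes> g) \<ominus> c \<otimes> g" using Skc(5) by simp
  also have "\<dots> = S \<otimes> k \<oplus> k'" using Skc(1) kc cc gc by algebra
  finally have eq: "(S \<otimes> s \<ominus> c) \<otimes> g = S \<otimes> k \<oplus> k'" .
  have inK: "S \<otimes> k \<oplus> k' \<in> K"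
    using ideal.I_l_closed[OF K kz(1) Skc(1)] Skc(3) additive_subgroup.a_closed[OF ideal.axioms(1)[OF K]] by blast
  have Ssc: "S \<otimes> s \<ominus> c \<in> carrier R" using Skc(1) s(1) cc by simp
  have Ssnp: "S \<otimes> s \<ominus> c \<notin> p"
  proof
    assume H: "S \<otimes> s \<ominus> c \<in> p"
    have "S \<otimes> s = (S \<otimes> s \<ominus> c) \<oplus> c" using Skc(1) s(1) cc by algebra
    moreover have "(S \<otimes> s \<ominus> c) \<oplus> c \<in> p"
      using additive_subgroup.a_closed[OF ideal.axioms(1)[OF primeideal.axioms(1)[OF p]] H Skc(4)] .
    ultimately have "S \<otimes> s \<in> p" by metis
    thus False using primeideal.I_prime[OF p, of S s] Skc(1,2) s(1,2) by auto
  qed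
  have "(S \<otimes> s \<ominus> c) \<otimes> g \<in> K" using eq inK by simp
  hence gsat: "g \<in> sat R p K" unfolding sat_def using Ssc Ssnp gc by blast
  have satKid: "ideal (sat R p K) R" using sat_ideal[OF p K] .
  have "insert g K \<subseteq> sat R p K" using gsat sat_sub[OF Kc p] by blast
  hence "K' \<subseteq> sat R p K" unfolding K'_def using genideal_minimal[OF satKid] by simp
  hence "sat R p K' \<subseteq> sat R p (sat R p K)" by (rule sat_mono)
  also have "\<dots> \<subseteq> sat R p K" using satd_sat[OF sat_satd[OF p]] ideal.Icarr[OF satKid] by blast
  finally show ?case using MK' by blast
qed

end

context cring begin
lemma prime_pow: assumes P: "primeideal P R" and y: "y \<in> carrier R" shows "y [^] (n::nat) \<in> P \<Longrightarrow> y \<in> P"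
proof (induction n)
  case 0 thus ?case using prime_not_carrier[OF P] by simp
next
  case (Suc n)
  have "y [^] Suc n = y \<otimes> y [^] n" using y by (simp add: nat_pow_Suc m_comm)
  hence "y \<otimes> y [^] n \<in> P" using Suc.prems by simp
  hence "y \<in> P \<or> y [^] n \<in> P" using primeideal.I_prime[OF P, of y "y [^] n"] y by simp
  thus ?case using Suc.IH by blast
qed
end

context NC begin

lemma pit:
  assumes P: "primeideal P R" and T: "primeideal T R" and PT: "P \<subseteq> T" and x: "x \<in> T"
    and Tmin: "\<And>Q. primeideal Q R \<Longrightarrow> P \<subseteq> Q \<Longrightarrow> x \<in> Q \<Longrightarrow> Q \<subseteq> T \<Longrightarrow> Q = T"
    and p: "primeideal p R" and Pp: "P \<subseteq> p" and pT: "p \<subseteq> T" and pne: "p \<noteq> T" and Pne: "P \<noteq> p"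
  shows False
proof -
  have Tc: "T \<subseteq> carrier R" using prime_sub[OF T] .
  have pc: "p \<subseteq> carrier R" using prime_sub[OF p] .
  have Pc: "P \<subseteq> carrier R" using prime_sub[OF P] .
  have xc: "x \<in> carrier R" using x Tc by blast
  have Pid: "ideal P R" using primeideal.axioms(1)[OF P] .
  have xnp: "x \<notin> p"
  proof
    assume "x \<in> p" thus False using Tmin[OF p Pp _ pT] pne by simp
  qed
  obtain k0 where k0: "pw R T P k0 \<subseteq> sat R T (Idl (insert x P))"
    using colon_nilp[OF T Pid PT x Tmin] by blast
  define D where "D n = pw R p P n" for n
  have Did: "ideal (D n) R" for n unfolding D_def using pw_ideal[OF pc Pc] .
  have Dc: "D n \<subseteq> carrier R" for n using ideal.Icarr[OF Did] by blast
  define Sym where "Sym n = sat R p (D n)" for n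
  have Symid: "ideal (Sym n) R" for n unfolding Sym_def using sat_ideal[OF p Did] .
  have Symc: "Sym n \<subseteq> carrier R" for n using ideal.Icarr[OF Symid] by blast
  have Symsdp: "satd R p (Sym n)" for n unfolding Sym_def using sat_satd[OF p] .
  have SymsdT: "satd R T (Sym n)" for n using satd_mono_prime[OF Symsdp pT] .
  have SymS: "Sym (Suc n) \<subseteq> Sym n" for n unfolding Sym_def D_def using sat_mono[OF pw_Suc_sub[OF pc Pc]] .
  have DSym: "D n \<subseteq> Sym n" for n unfolding Sym_def using sat_sub[OF Dc p] .
  have PSym: "P \<subseteq> Sym n" for n using DSym pw_P[OF pc Pc] unfolding D_def by blast
  have Pxid: "ideal (PIdl x) R" using cgenideal_ideal[OF xc] .
  have Pxc: "PIdl x \<subseteq> carrier R" using ideal.Icarr[OF Pxid] by blast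
  define Y where "Y n = sat R T (Sym n <+>\<^bsub>R\<^esub> PIdl x)" for n
  have SPid: "ideal (Sym n <+>\<^bsub>R\<^esub> PIdl x) R" for n using add_ideals[OF Symid Pxid] .
  have Yid: "ideal (Y n) R" for n unfolding Y_def using sat_ideal[OF T SPid] .
  have Ysd: "satd R T (Y n)" for n unfolding Y_def using sat_satd[OF T] .
  have pwY: "pw R T P k0 \<subseteq> Y n" for n
  proof -
    have "insert x P \<subseteq> Sym n <+>\<^bsub>R\<^esub> PIdl x"
      using in_set_add_r[OF Symid cgenideal_self[OF xc] Pxc] in_set_add_l[OF Pxid _ Symc] PSym[of n] by blast
    hence "Idl (insert x P) \<subseteq> Sym n <+>\<^bsub>R\<^esub> PIdl x" using genideal_minimal[OF SPid] by simp
    hence "sat R T (Idl (insert x P)) \<subseteq> Y n" unfolding Y_def by (rule sat_mono)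
    thus ?thesis using k0 by blast
  qed
  have "range Y \<noteq> {}" by simp
  moreover have "\<And>J. J \<in> range Y \<Longrightarrow> ideal J R \<and> satd R T J \<and> pw R T P k0 \<subseteq> J"
    using Yid Ysd pwY by blast
  ultimately obtain M where "M \<in> range Y" and Mmin: "\<forall>X\<in>range Y. X \<subseteq> M \<longrightarrow> X = M"
    using dcc[OF T Pc, of "range Y" k0] by blast
  then obtain n where Mn: "M = Y n" by blast
  have "Y (Suc n) \<subseteq> Y n" unfolding Y_def using sat_mono[OF set_add_mono_l[OF SymS]] .
  moreover have "Y (Suc n) \<in> range Y" by simp
  ultimately have YS: "Y (Suc n) = Y n" using Mmin Mn by simp
  define JM where "JM = Idl {y \<otimes> m | y m. y \<in> T \<and> m \<in> Sym n}"
  have gc: "{y \<otimes> m | y m. y \<in> T \<and> m \<in> Sym n} \<subseteq> carrier R" using Tc Symc by blast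
  have C1: "Sym n \<subseteq> sat R T (Sym (Suc n) <+>\<^bsub>R\<^esub> JM)"
  proof
    fix a assume a: "a \<in> Sym n"
    have ac: "a \<in> carrier R" using a Symc by blast
    have "a \<in> Sym n <+>\<^bsub>R\<^esub> PIdl x" using in_set_add_l[OF Pxid a Symc] .
    hence "a \<in> Y n" unfolding Y_def using sat_sub[OF _ T] ideal.Icarr[OF SPid] by blast
    hence "a \<in> Y (Suc n)" using YS by simp
    then obtain s where s: "s \<in> carrier R" "s \<notin> T" "s \<otimes> a \<in> Sym (Suc n) <+>\<^bsub>R\<^esub> PIdl x"
      unfolding Y_def sat_def by blast
    then obtain b w where bw: "b \<in> Sym (Suc n)" "w \<in> PIdl x" "s \<otimes> a = b \<oplus> w" unfolding mem_set_add by blast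
    obtain r where r: "r \<in> carrier R" "w = r \<otimes> x" using bw(2) unfolding mem_PIdl by blast
    have bc: "b \<in> carrier R" using bw(1) Symc by blast
    have "x \<otimes> r = (s \<otimes> a) \<ominus> b"
    proof -
      have "(s \<otimes> a) \<ominus> b = (b \<oplus> r \<otimes> x) \<ominus> b" using bw(3) r(2) by simp
      also have "\<dots> = x \<otimes> r" using bc r(1) xc by algebra
      finally show ?thesis by simp
    qed
    moreover have "(s \<otimes> a) \<ominus> b \<in> Sym n"
      using ideal_diff[OF Symid ideal.I_l_closed[OF Symid a s(1)]] bw(1) SymS by blast
    ultimately have "x \<otimes> r \<in> Sym n" by simp
    hence rS: "r \<in> Sym n" using Symsdp xnp xc r(1) unfolding satd_def by blast
    have "x \<otimes> r \<in> JM" unfolding JM_def using genideal_self[OF gc] x rS by blast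
    moreover have "s \<otimes> a = b \<oplus> x \<otimes> r" using bw(3) r m_comm[OF r(1) xc] by simp
    ultimately have "s \<otimes> a \<in> Sym (Suc n) <+>\<^bsub>R\<^esub> JM" unfolding mem_set_add using bw(1) by blast
    thus "a \<in> sat R T (Sym (Suc n) <+>\<^bsub>R\<^esub> JM)" unfolding sat_def using s ac by blast
  qed
  obtain A where A: "A \<subseteq> carrier R" "finite A" "Sym n = Idl A" using finetely_gen[OF Symid] by blast
  have Aeq: "Sym n = Idl (Sym (Suc n) \<union> A)"
  proof
    have s1: "Sym (Suc n) \<union> A \<subseteq> carrier R" using Symc A(1) by blast
    have "A \<subseteq> Idl (Sym (Suc n) \<union> A)" using genideal_self[OF s1] by blast
    thus "Sym n \<subseteq> Idl (Sym (Suc n) \<union> A)" unfolding A(3) using genideal_minimal[OF genideal_ideal[OF s1]] by simp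
    have "A \<subseteq> Sym n" unfolding A(3) using genideal_self[OF A(1)] .
    hence "Sym (Suc n) \<union> A \<subseteq> Sym n" using SymS by blast
    thus "Idl (Sym (Suc n) \<union> A) \<subseteq> Sym n" using genideal_minimal[OF Symid] by simp
  qed
  have "Sym n \<subseteq> sat R T (Sym (Suc n))"
    using nak[OF T A(2) A(1) Symid Aeq] C1 unfolding JM_def by blast
  hence SymSS: "Sym n \<subseteq> Sym (Suc n)" using satd_sat[OF SymsdT Symc] by blast
  define G2 where "G2 = {y \<otimes> m | y m. y \<in> p \<and> m \<in> D n}"
  have G2c: "G2 \<subseteq> carrier R" unfolding G2_def using pc Dc by blast
  have "D (Suc n) = Idl (P \<union> G2)" unfolding D_def G2_def by simp
  also have "\<dots> \<subseteq> P <+>\<^bsub>R\<^esub> Idl G2"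
  proof -
    have I: "ideal (P <+>\<^bsub>R\<^esub> Idl G2) R" using add_ideals[OF Pid genideal_ideal[OF G2c]] .
    have "P \<subseteq> P <+>\<^bsub>R\<^esub> Idl G2" using in_set_add_l[OF genideal_ideal[OF G2c] _ Pc] by blast
    moreover have "G2 \<subseteq> P <+>\<^bsub>R\<^esub> Idl G2"
    proof -
      have IG: "Idl G2 \<subseteq> carrier R" using ideal.Icarr[OF genideal_ideal[OF G2c]] by blast
      show ?thesis using in_set_add_r[OF Pid _ IG] genideal_self[OF G2c] by blast
    qed
    ultimately show ?thesis using genideal_minimal[OF I] by simp
  qed
  finally have DS: "D (Suc n) \<subseteq> P <+>\<^bsub>R\<^esub> Idl G2" .
  have C2: "D n \<subseteq> sat R p (P <+>\<^bsub>R\<^esub> Idl G2)"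
  proof -
    have "D n \<subseteq> Sym (Suc n)" using DSym SymSS by blast
    also have "\<dots> \<subseteq> sat R p (P <+>\<^bsub>R\<^esub> Idl G2)" unfolding Sym_def using sat_mono[OF DS] .
    finally show ?thesis .
  qed
  obtain A2 where A2: "A2 \<subseteq> carrier R" "finite A2" "D n = Idl A2" using finetely_gen[OF Did] by blast
  have PD: "P \<subseteq> D n" unfolding D_def using pw_P[OF pc Pc] .
  have A2eq: "D n = Idl (P \<union> A2)"
  proof
    have s1: "P \<union> A2 \<subseteq> carrier R" using Pc A2(1) by blast
    have "A2 \<subseteq> Idl (P \<union> A2)" using genideal_self[OF s1] by blast
    thus "D n \<subseteq> Idl (P \<union> A2)" unfolding A2(3) using genideal_minimal[OF genideal_ideal[OF s1]] by simp
    have "A2 \<subseteq> D n" unfolding A2(3) using genideal_self[OF A2(1)] .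
    hence "P \<union> A2 \<subseteq> D n" using PD by blast
    thus "Idl (P \<union> A2) \<subseteq> D n" using genideal_minimal[OF Did] by simp
  qed
  have "D n \<subseteq> sat R p P"
    using nak[OF p A2(2) A2(1) Pid A2eq] C2 unfolding G2_def by blast
  hence DP: "D n \<subseteq> P" using satd_sat[OF prime_satd[OF P Pp] Pc] by blast
  obtain y where y: "y \<in> p" "y \<notin> P" using Pp Pne by blast
  have "y [^] n \<in> D n" unfolding D_def using pw_pow[OF pc Pc y(1)] .
  hence "y \<in> P" using prime_pow[OF P] y(1) pc DP by blast
  thus False using y by simp
qed

lemma cover:
  assumes P: "primeideal P R" and Q: "primeideal Q R" and PQ: "P \<subseteq> Q" "P \<noteq> Q"
  shows "\<exists>T. primeideal T R \<and> P \<subseteq> T \<and> P \<noteq> T \<and> T \<subseteq> Q \<and>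
     (\<forall>p. primeideal p R \<and> P \<subseteq> p \<and> p \<subseteq> T \<longrightarrow> p = P \<or> p = T)"
proof -
  obtain x where x: "x \<in> Q" "x \<notin> P" using PQ by blast
  have Pc: "P \<subseteq> carrier R" using prime_sub[OF P] .
  have xc: "x \<in> carrier R" using x prime_sub[OF Q] by blast
  have s: "insert x P \<subseteq> carrier R" using Pc xc by simp
  have Iid: "ideal (Idl (insert x P)) R" using genideal_ideal[OF s] .
  have IQ: "Idl (insert x P) \<subseteq> Q" using genideal_minimal[OF primeideal.axioms(1)[OF Q]] x PQ by simp
  obtain T where T: "primeideal T R" "Idl (insert x P) \<subseteq> T" "T \<subseteq> Q"
    and Tm: "\<forall>T'. primeideal T' R \<and> Idl (insert x P) \<subseteq> T' \<and> T' \<subseteq> T \<longrightarrow> T' = T"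
    using minimal_over[OF Iid Q IQ] by blast
  have gs: "insert x P \<subseteq> Idl (insert x P)" using genideal_self[OF s] .
  have PT: "P \<subseteq> T" and xT: "x \<in> T" using gs T(2) by auto
  have Tmin: "Q' = T" if "primeideal Q' R" "P \<subseteq> Q'" "x \<in> Q'" "Q' \<subseteq> T" for Q'
  proof -
    have "Idl (insert x P) \<subseteq> Q'" using genideal_minimal[OF primeideal.axioms(1)[OF that(1)]] that(2,3) by simp
    thus ?thesis using Tm that(1,4) by blast
  qed
  show ?thesis
  proof (intro exI[of _ T] conjI allI impI)
    show "primeideal T R" "P \<subseteq> T" "T \<subseteq> Q" using T PT by auto
    show "P \<noteq> T" using xT x(2) by blast
    fix p assume p: "primeideal p R \<and> P \<subseteq> p \<and> p \<subseteq> T"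
    show "p = P \<or> p = T"
    proof (rule ccontr)
      assume "\<not> (p = P \<or> p = T)"
      thus False using pit[OF P T(1) PT xT Tmin] p by blast
    qed
  qed
qed

end

lemma mem_Spec: "P \<in> Spec R \<longleftrightarrow> primeideal P R" unfolding Spec_def by simp

context cring begin

lemma prod_avoid:
  assumes fin: "finite G" and Q: "primeideal Q R"
  shows "(\<forall>f\<in>G. ideal f R \<and> \<not> f \<subseteq> Q) \<Longrightarrow> \<exists>b\<in>carrier R - Q. \<forall>f\<in>G. b \<in> f"
  using fin
proof (induction G)
  case empty thus ?case using prime_not_carrier[OF Q] by (intro bexI[of _ \<one>]) auto
next
  case (insert f G)
  obtain b where b: "b \<in> carrier R" "b \<notin> Q" "\<forall>g\<in>G. b \<in> g" using insert.IH insert.prems by blast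
  have fid: "ideal f R" and fQ: "\<not> f \<subseteq> Q" using insert.prems by auto
  obtain a where a: "a \<in> f" "a \<notin> Q" using fQ by blast
  have ac: "a \<in> carrier R" using a(1) ideal.Icarr[OF fid] by blast
  have "a \<otimes> b \<notin> Q" using primeideal.I_prime[OF Q ac b(1)] a(2) b(2) by blast
  moreover have "a \<otimes> b \<in> f" using ideal.I_r_closed[OF fid a(1) b(1)] .
  moreover have "\<forall>g\<in>G. a \<otimes> b \<in> g"
  proof
    fix g assume g: "g \<in> G"
    have "ideal g R" using insert.prems g by blast
    thus "a \<otimes> b \<in> g" using ideal.I_l_closed[of g R b a] b(3) g ac by blast
  qed
  ultimately show ?case using ac b(1) by (intro bexI[of _ "a \<otimes> b"]) auto
qed

lemma Vfin:
  assumes fin: "finite G" and pr: "\<forall>f\<in>G. primeideal f R"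
  shows "{Q \<in> Spec R. \<exists>f\<in>G. f \<subseteq> Q} = {Q \<in> Spec R. carrier R \<inter> \<Inter>G \<subseteq> Q}"
proof
  show "{Q \<in> Spec R. \<exists>f\<in>G. f \<subseteq> Q} \<subseteq> {Q \<in> Spec R. carrier R \<inter> \<Inter>G \<subseteq> Q}" by blast
  show "{Q \<in> Spec R. carrier R \<inter> \<Inter>G \<subseteq> Q} \<subseteq> {Q \<in> Spec R. \<exists>f\<in>G. f \<subseteq> Q}"
  proof
    fix Q assume Q: "Q \<in> {Q \<in> Spec R. carrier R \<inter> \<Inter>G \<subseteq> Q}"
    hence Qp: "primeideal Q R" and sub: "carrier R \<inter> \<Inter>G \<subseteq> Q" by (auto simp: mem_Spec)
    have "\<exists>f\<in>G. f \<subseteq> Q"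
    proof (rule ccontr)
      assume "\<not> (\<exists>f\<in>G. f \<subseteq> Q)"
      hence "\<forall>f\<in>G. ideal f R \<and> \<not> f \<subseteq> Q" using pr primeideal.axioms(1) by blast
      then obtain b where "b \<in> carrier R - Q" "\<forall>f\<in>G. b \<in> f" using prod_avoid[OF fin Qp] by blast
      thus False using sub by blast
    qed
    thus "Q \<in> {Q \<in> Spec R. \<exists>f\<in>G. f \<subseteq> Q}" using Q by blast
  qed
qed

lemma zc_fin: assumes "finite G" "\<forall>f\<in>G. primeideal f R"
  shows "zariski_closed R {Q \<in> Spec R. \<exists>f\<in>G. f \<subseteq> Q}"
  unfolding zariski_closed_def Vfin[OF assms] by (intro exI[of _ "carrier R \<inter> \<Inter>G"]) auto

end

context NC begin

lemma clopen:
  assumes fin: "finite F" and Fp: "\<forall>f\<in>F. primeideal f R" and Fc: "\<forall>Q. primeideal Q R \<longrightarrow> (\<exists>f\<in>F. f \<subseteq> Q)"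
    and S: "specialization_closed R S" and down: "\<And>Q f. Q \<in> S \<Longrightarrow> f \<in> F \<Longrightarrow> f \<subseteq> Q \<Longrightarrow> f \<in> S"
  shows "zariski_closed R S \<and> zariski_open R S"
proof -
  have SS: "S \<subseteq> Spec R" and Ssp: "\<And>P Q. P \<in> S \<Longrightarrow> Q \<in> Spec R \<Longrightarrow> P \<subseteq> Q \<Longrightarrow> Q \<in> S"
    using S unfolding specialization_closed_def by blast+
  have e1: "S = {Q \<in> Spec R. \<exists>f\<in>F \<inter> S. f \<subseteq> Q}"
  proof
    show "S \<subseteq> {Q \<in> Spec R. \<exists>f\<in>F \<inter> S. f \<subseteq> Q}"
    proof
      fix Q assume Q: "Q \<in> S"
      hence Qs: "Q \<in> Spec R" using SS by blast
      then obtain f where f: "f \<in> F" "f \<subseteq> Q" using Fc mem_Spec by blast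
      have "f \<in> S" using down[OF Q f] .
      thus "Q \<in> {Q \<in> Spec R. \<exists>f\<in>F \<inter> S. f \<subseteq> Q}" using f Qs by blast
    qed
    show "{Q \<in> Spec R. \<exists>f\<in>F \<inter> S. f \<subseteq> Q} \<subseteq> S" using Ssp by blast
  qed
  have e2: "Spec R - S = {Q \<in> Spec R. \<exists>f\<in>F - S. f \<subseteq> Q}"
  proof
    show "Spec R - S \<subseteq> {Q \<in> Spec R. \<exists>f\<in>F - S. f \<subseteq> Q}"
    proof
      fix Q assume Q: "Q \<in> Spec R - S"
      then obtain f where f: "f \<in> F" "f \<subseteq> Q" using Fc mem_Spec by blast
      have "f \<notin> S"
      proof
        assume "f \<in> S" thus False using Ssp[of f Q] Q f by blast
      qed
      thus "Q \<in> {Q \<in> Spec R. \<exists>f\<in>F - S. f \<subseteq> Q}" using f Q by blast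
    qed
    show "{Q \<in> Spec R. \<exists>f\<in>F - S. f \<subseteq> Q} \<subseteq> Spec R - S"
    proof
      fix Q assume "Q \<in> {Q \<in> Spec R. \<exists>f\<in>F - S. f \<subseteq> Q}"
      then obtain f where Q: "Q \<in> Spec R" and f: "f \<in> F" "f \<notin> S" "f \<subseteq> Q" by blast
      have "Q \<notin> S"
      proof
        assume "Q \<in> S" thus False using down[of Q f] f by blast
      qed
      thus "Q \<in> Spec R - S" using Q by blast
    qed
  qed
  have "zariski_closed R S" using zc_fin[of "F \<inter> S"] fin Fp e1 by simp
  moreover have "zariski_closed R (Spec R - S)" using zc_fin[of "F - S"] fin Fp e2 by simp
  ultimately show ?thesis unfolding zariski_open_def using SS by blast
qed

lemma chain:
  assumes wc: "weak_cousin R \<phi>" and Q: "primeideal Q R" and m: "primeideal m R" "m \<subseteq> Q"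
  shows "\<exists>n::nat. \<forall>j. Q \<in> \<phi> j \<longrightarrow> m \<in> \<phi> (j - int n)"
proof (rule ccontr)
  assume nm: "\<not> ?thesis"
  define Bad where "Bad = {T. primeideal T R \<and> m \<subseteq> T \<and> T \<subseteq> Q \<and> \<not> (\<exists>n::nat. \<forall>j. Q \<in> \<phi> j \<longrightarrow> T \<in> \<phi> (j - int n))}"
  have "m \<in> Bad" unfolding Bad_def using m nm by blast
  hence "Bad \<noteq> {}" by (rule ne_I)
  moreover have "\<And>I. I \<in> Bad \<Longrightarrow> ideal I R" unfolding Bad_def using primeideal.axioms(1) by blast
  ultimately obtain T where TB: "T \<in> Bad" and Tmax: "\<forall>X\<in>Bad. T \<subseteq> X \<longrightarrow> X = T"
    using max_family[of Bad] by blast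
  have T: "primeideal T R" "m \<subseteq> T" "T \<subseteq> Q" and Tn: "\<not> (\<exists>n::nat. \<forall>j. Q \<in> \<phi> j \<longrightarrow> T \<in> \<phi> (j - int n))"
    using TB unfolding Bad_def by blast+
  have TQ: "T \<noteq> Q"
  proof
    assume "T = Q"
    hence "\<forall>j. Q \<in> \<phi> j \<longrightarrow> T \<in> \<phi> (j - int 0)" by simp
    thus False using Tn by blast
  qed
  obtain T' where T': "primeideal T' R" "T \<subseteq> T'" "T \<noteq> T'" "T' \<subseteq> Q"
    and Tc: "\<forall>p. primeideal p R \<and> T \<subseteq> p \<and> p \<subseteq> T' \<longrightarrow> p = T \<or> p = T'"
    using cover[OF T(1) Q T(3) TQ] by blast
  have "T' \<notin> Bad" using Tmax T'(2,3) by blast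
  moreover have "m \<subseteq> T'" using T(2) T'(2) by blast
  ultimately obtain n where n: "\<forall>j. Q \<in> \<phi> j \<longrightarrow> T' \<in> \<phi> (j - int n)" unfolding Bad_def using T'(1,4) by blast
  have nobetween: "\<not> (\<exists>X\<in>Spec R. T \<subset> X \<and> X \<subset> T')" using Tc by (auto simp: mem_Spec)
  have "\<forall>j. Q \<in> \<phi> j \<longrightarrow> T \<in> \<phi> (j - int (Suc n))"
  proof (intro allI impI)
    fix j assume "Q \<in> \<phi> j"
    hence "T' \<in> \<phi> (j - int n)" using n by blast
    moreover have "T \<in> Spec R" "T' \<in> Spec R" using T(1) T'(1) by (auto simp: mem_Spec)
    moreover have "T \<subset> T'" using T'(2,3) by blast
    ultimately have "T \<in> \<phi> (j - int n - 1)" using wc nobetween unfolding weak_cousin_def by blast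
    moreover have "j - int n - 1 = j - int (Suc n)" by simp
    ultimately show "T \<in> \<phi> (j - int (Suc n))" by simp
  qed
  thus False using Tn by blast
qed

end

lemma phi_anti:
  assumes "\<forall>i. \<phi> (i + 1) \<subseteq> \<phi> i" shows "\<phi> (b + int k) \<subseteq> \<phi> b"
proof (induction k)
  case 0 thus ?case by simp
next
  case (Suc k)
  have "\<phi> (b + int (Suc k)) = \<phi> ((b + int k) + 1)" by (simp add: algebra_simps)
  also have "\<dots> \<subseteq> \<phi> (b + int k)" using assms by blast
  finally show ?case using Suc.IH by blast
qed

lemma phi_le: assumes "\<forall>i. \<phi> (i + 1) \<subseteq> \<phi> i" "b \<le> a" shows "\<phi> a \<subseteq> (\<phi> :: int \<Rightarrow> 'x set) b"
proof -
  have "a = b + int (nat (a - b))" using assms(2) by simp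
  thus ?thesis using phi_anti[OF assms(1), of b "nat (a - b)"] by metis
qed

theorem proposition4p9:
  fixes R :: "('a, 'b) ring_scheme" and \<phi> :: "int \<Rightarrow> 'a set set"
  assumes "cring R" and "noetherian_ring R"
    and "sp_filtration R \<phi>" and "weak_cousin R \<phi>"
  shows "\<exists>j0. (\<forall>j \<le> j0. \<phi> j = \<phi> j0) \<and> zariski_open R (\<phi> j0) \<and> zariski_closed R (\<phi> j0)
         \<and> zariski_open R (\<Inter>i. \<phi> i) \<and> zariski_closed R (\<Inter>i. \<phi> i)"
proof -
  interpret NC R using assms(1,2) by (simp add: NC_def)
  have spc: "\<And>i. specialization_closed R (\<phi> i)" and dec: "\<forall>i. \<phi> (i + 1) \<subseteq> \<phi> i"
    using assms(3) unfolding sp_filtration_def by blast+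
  have phS: "\<phi> i \<subseteq> Spec R" for i using spc[of i] unfolding specialization_closed_def by blast
  have phsp: "\<And>P Q. P \<in> \<phi> i \<Longrightarrow> Q \<in> Spec R \<Longrightarrow> P \<subseteq> Q \<Longrightarrow> Q \<in> \<phi> i" for i
    using spc[of i] unfolding specialization_closed_def by blast
  obtain F where F: "finite F" "\<forall>f\<in>F. primeideal f R" "\<forall>Q. primeideal Q R \<longrightarrow> (\<exists>f\<in>F. f \<subseteq> Q)"
    using finite_primes by blast
  define U where "U = (\<Union>i. \<phi> i)"
  define W where "W = (\<Inter>i. \<phi> i)"
  have US: "U \<subseteq> Spec R" unfolding U_def using phS by (rule UN_least)
  have Usp: "specialization_closed R U" unfolding specialization_closed_def
  proof (intro conjI allI impI)
    show "U \<subseteq> Spec R" by (rule US)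
    fix P Q assume H: "P \<in> U \<and> Q \<in> Spec R \<and> P \<subseteq> Q"
    then obtain i where "P \<in> \<phi> i" unfolding U_def by blast
    hence "Q \<in> \<phi> i" using phsp H by blast
    thus "Q \<in> U" unfolding U_def by blast
  qed
  have Udown: "f \<in> U" if Q: "Q \<in> U" and f: "f \<in> F" "f \<subseteq> Q" for Q f
  proof -
    obtain i where i: "Q \<in> \<phi> i" using Q unfolding U_def by blast
    have "primeideal Q R" using i phS mem_Spec by blast
    then obtain n where "\<forall>j. Q \<in> \<phi> j \<longrightarrow> f \<in> \<phi> (j - int n)" using chain[OF assms(4)] F(2) f by blast
    hence "f \<in> \<phi> (i - int n)" using i by blast
    thus ?thesis unfolding U_def by blast
  qed
  have Uco: "zariski_closed R U \<and> zariski_open R U" by (rule clopen[OF F Usp], rule Udown)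
  have W0: "W \<subseteq> \<phi> 0" unfolding W_def by (rule INT_lower) simp
  have WS: "W \<subseteq> Spec R" using W0 phS[of 0] by (rule subset_trans)
  have Wsp: "specialization_closed R W" unfolding specialization_closed_def
  proof (intro conjI allI impI)
    show "W \<subseteq> Spec R" by (rule WS)
    fix P Q assume H: "P \<in> W \<and> Q \<in> Spec R \<and> P \<subseteq> Q"
    have "Q \<in> \<phi> i" for i
    proof -
      have "P \<in> \<phi> i" using H unfolding W_def by simp
      thus ?thesis using phsp H by blast
    qed
    thus "Q \<in> W" unfolding W_def by simp
  qed
  have Wdown: "f \<in> W" if Q: "Q \<in> W" and f: "f \<in> F" "f \<subseteq> Q" for Q f
  proof -
    have "primeideal Q R" using Q WS mem_Spec by blast
    then obtain n where n: "\<forall>j. Q \<in> \<phi> j \<longrightarrow> f \<in> \<phi> (j - int n)" using chain[OF assms(4)] F(2) f by blast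
    have "f \<in> \<phi> i" for i
    proof -
      have "Q \<in> \<phi> (i + int n)" using Q unfolding W_def by blast
      hence "f \<in> \<phi> (i + int n - int n)" using n by blast
      thus ?thesis by simp
    qed
    thus ?thesis unfolding W_def by blast
  qed
  have Wco: "zariski_closed R W \<and> zariski_open R W" by (rule clopen[OF F Wsp], rule Wdown)
  define G1 where "G1 = F \<inter> U"
  define idx where "idx f = (SOME i. f \<in> \<phi> i)" for f
  have idx: "f \<in> \<phi> (idx f)" if "f \<in> G1" for f
  proof -
    have "\<exists>i. f \<in> \<phi> i" using that unfolding G1_def U_def by blast
    thus ?thesis unfolding idx_def by (rule someI_ex)
  qed
  define j0 where "j0 = (if G1 = {} then 0 else Min (idx ` G1))"
  have finG1: "finite G1" unfolding G1_def using F(1) by simp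
  have j0le: "j0 \<le> idx f" if "f \<in> G1" for f
    unfolding j0_def using that finG1 by auto
  have Uj0: "U \<subseteq> \<phi> j0"
  proof
    fix Q assume Q: "Q \<in> U"
    have "primeideal Q R" using Q US mem_Spec by blast
    then obtain f where f: "f \<in> F" "f \<subseteq> Q" using F(3) by blast
    have "f \<in> G1" unfolding G1_def using Udown[OF Q f] f(1) by blast
    hence "f \<in> \<phi> j0" using idx phi_le[OF dec j0le] by blast
    moreover have "Q \<in> Spec R" using Q US by blast
    ultimately show "Q \<in> \<phi> j0" using phsp f(2) by blast
  qed
  have j0U: "\<phi> j0 = U" using Uj0 unfolding U_def by blast
  have stab: "\<forall>j \<le> j0. \<phi> j = \<phi> j0"
  proof (intro allI impI)
    fix j assume "j \<le> j0"
    hence "\<phi> j0 \<subseteq> \<phi> j" using phi_le[OF dec] by blast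
    moreover have "\<phi> j \<subseteq> U" unfolding U_def by blast
    ultimately show "\<phi> j = \<phi> j0" using j0U by blast
  qed
  show ?thesis
    using stab Uco Wco j0U unfolding W_def by (intro exI[of _ j0]) simp
qed


end
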